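(* Let $G$ and $H$ be graded groups, let $U\subset G$ be open and let $\Phi:U\to H$ be a smooth map. Then $\Phi$ is uniformly Pansu differentiable on $U$ if and only if $\Phi$ preserves the filtration at every point $x\in U$. Moreover, for such a map $\Phi$, the Pansu derivative yields a smooth function $(x,z)\mapsto \mathrm{PD}_x\Phi(z)$ on $U\times G$.
   Context: A graded group is a connected, simply connected nilpotent real Lie group $G$ whose Lie algebra $\mathfrak g$ is equipped with a vector space decomposition $\mathfrak g=\bigoplus_{j\ge1}\mathfrak g_j$ (only finitely many $\mathfrak g_j$ nonzero) with $[\mathfrak g_i,\mathfrak g_j]\subset\mathfrak g_{i+j}$. The map $\exp_G:\mathfrak g\to G$ is a global diffeomorphism, with inverse $\ln_G$. Dilations: for $r>0$, $\delta_r:\mathfrak g\to\mathfrak g$ is the linear map with $\delta_rX=r^jX$ for $X\in\mathfrak g_j$, and on $G$, $\delta_r(\exp_G X)=\exp_G(\delta_rX)$. $H$ is another graded group with Lie algebra $\mathfrak h=\bigoplus_j\mathfrak h_j$ and analogous notation. For $x\in G$, $\tau^G_x:=D_0L_x:\mathfrak g\to T_xG$ is the differential at the identity of the left translation $L_x$ (similarly $\tau^H$). For $\Phi$ smooth from an open $U\subset G$ to $H$ and $x\in U$, set $\mathfrak d_x\Phi:=(\tau^H_{\Phi(x)})^{-1}\circ D_x\Phi\circ\tau^G_x:\mathfrak g\to\mathfrak h$. $\Phi$ preserves the filtration at $x$ if $\mathfrak d_x\Phi(\mathfrak g_j)\subset\mathfrak h_1\oplus\cdots\oplus\mathfrak h_j$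 for all $j$. A map $\Phi:U\to H$ is Pansu differentiable at $x\in U$ if for every $z\in G$ the limit $\mathrm{PD}_x\Phi(z):=\lim_{\varepsilon\to0^+}\delta_{\varepsilon^{-1}}\big(\Phi(x)^{-1}\Phi(x\,\delta_\varepsilon z)\big)$ exists; it is uniformly Pansu differentiable on $U$ if it is Pansu differentiable at every $x\in U$ and the limit holds locally uniformly on $U\times G$ (every point of $U\times G$ has a compact neighbourhood on which the convergence is uniform). *)

theory Defs
  imports "HOL-Analysis.Analysis"
begin

text \<open>C-infinity smoothness on a set U (intended: U open): a family D of iterated
  Frechet derivatives, D [] = f, and at every point of U the map D ds has Frechet
  derivative v \<mapsto> D (v # ds) x.\<close>
definition smooth_on :: "'a::euclidean_space set \<Rightarrow> ('a \<Rightarrow> 'b::euclidean_space) \<Rightarrow> bool" where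
  "smooth_on U f \<longleftrightarrow>
     (\<exists>D :: 'a list \<Rightarrow> 'a \<Rightarrow> 'b. D [] = f \<and>
        (\<forall>ds. \<forall>x\<in>U. (D ds has_derivative (\<lambda>v. D (v # ds) x)) (at x)))"

definition graded_vs :: "(nat \<Rightarrow> 'g::euclidean_space set) \<Rightarrow> bool" where
  "graded_vs V \<longleftrightarrow> (\<forall>j. subspace (V j)) \<and> V 0 = {0} \<and> (\<exists>N. \<forall>j>N. V j = {0}) \<and>
     (\<forall>x. \<exists>!c. (\<forall>j. c j \<in> V j) \<and> finite {j. c j \<noteq> 0} \<and> x = (\<Sum>j\<in>{j. c j \<noteq> 0}. c j))"

definition gcomp :: "(nat \<Rightarrow> 'g::euclidean_space set) \<Rightarrow> 'g \<Rightarrow> nat \<Rightarrow> 'g" where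
  "gcomp V x = (THE c. (\<forall>j. c j \<in> V j) \<and> finite {j. c j \<noteq> 0} \<and> x = (\<Sum>j\<in>{j. c j \<noteq> 0}. c j))"

definition dil :: "(nat \<Rightarrow> 'g::euclidean_space set) \<Rightarrow> real \<Rightarrow> 'g \<Rightarrow> 'g" where
  "dil V r x = (\<Sum>j\<in>{j. gcomp V x j \<noteq> 0}. (r ^ j) *\<^sub>R gcomp V x j)"

text \<open>A graded group in exponential coordinates: the underlying set is the Lie algebra
  'g itself (so exp_G = id), with a smooth associative group law m for which every line
  t \<mapsto> t X is a one-parameter subgroup (i.e. exp is the identity map; identity 0 and
  inverse -X follow), and the dilations of the grading V are group automorphisms
  (equivalently, the grading is compatible with the Lie bracket: [g_i,g_j] \<subseteq> g_(i+j)).\<close>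
definition graded_group :: "('g::euclidean_space \<Rightarrow> 'g \<Rightarrow> 'g) \<Rightarrow> (nat \<Rightarrow> 'g set) \<Rightarrow> bool" where
  "graded_group m V \<longleftrightarrow>
     (\<forall>x y z. m (m x y) z = m x (m y z)) \<and>
     (\<forall>X s t. m (s *\<^sub>R X) (t *\<^sub>R X) = (s + t) *\<^sub>R X) \<and>
     smooth_on UNIV (\<lambda>p. m (fst p) (snd p)) \<and>
     graded_vs V \<and>
     (\<forall>r>0. \<forall>x y. dil V r (m x y) = m (dil V r x) (dil V r y))"

definition tau :: "('g::euclidean_space \<Rightarrow> 'g \<Rightarrow> 'g) \<Rightarrow> 'g \<Rightarrow> 'g \<Rightarrow> 'g" where
  "tau m x = frechet_derivative (m x) (at 0)"

definition ldiff :: "('g::euclidean_space \<Rightarrow> 'g \<Rightarrow> 'g) \<Rightarrow> ('h::euclidean_space \<Rightarrow> 'h \<Rightarrow> 'h)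
     \<Rightarrow> ('g \<Rightarrow> 'h) \<Rightarrow> 'g \<Rightarrow> 'g \<Rightarrow> 'h" where
  "ldiff mG mH Phi x = inv (tau mH (Phi x)) \<circ> frechet_derivative Phi (at x) \<circ> tau mG x"

definition preserves_filtration_at ::
  "('g::euclidean_space \<Rightarrow> 'g \<Rightarrow> 'g) \<Rightarrow> (nat \<Rightarrow> 'g set) \<Rightarrow>
   ('h::euclidean_space \<Rightarrow> 'h \<Rightarrow> 'h) \<Rightarrow> (nat \<Rightarrow> 'h set) \<Rightarrow> ('g \<Rightarrow> 'h) \<Rightarrow> 'g \<Rightarrow> bool" where
  "preserves_filtration_at mG VG mH VH Phi x \<longleftrightarrow>
     (\<forall>j. ldiff mG mH Phi x ` VG j \<subseteq> span (\<Union>i\<in>{1..j}. VH i))"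

text \<open>The Pansu difference quotient delta_(1/eps)(Phi(x)^-1 Phi(x delta_eps z));
  in exponential coordinates the group inverse is negation.\<close>
definition pansu_quot ::
  "('g::euclidean_space \<Rightarrow> 'g \<Rightarrow> 'g) \<Rightarrow> (nat \<Rightarrow> 'g set) \<Rightarrow>
   ('h::euclidean_space \<Rightarrow> 'h \<Rightarrow> 'h) \<Rightarrow> (nat \<Rightarrow> 'h set) \<Rightarrow> ('g \<Rightarrow> 'h) \<Rightarrow> 'g \<Rightarrow> 'g \<Rightarrow> real \<Rightarrow> 'h" where
  "pansu_quot mG VG mH VH Phi x z eps =
     dil VH (1 / eps) (mH (- Phi x) (Phi (mG x (dil VG eps z))))"

definition pansu_diff_at where
  "pansu_diff_at mG VG mH VH Phi x \<longleftrightarrow>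
     (\<forall>z. \<exists>l. (pansu_quot mG VG mH VH Phi x z \<longlongrightarrow> l) (at_right 0))"

definition PD where
  "PD mG VG mH VH Phi x z = Lim (at_right 0) (pansu_quot mG VG mH VH Phi x z)"

definition unif_pansu_diff_on where
  "unif_pansu_diff_on mG VG mH VH Phi U \<longleftrightarrow>
     (\<forall>x\<in>U. pansu_diff_at mG VG mH VH Phi x) \<and>
     (\<forall>p\<in>U \<times> UNIV. \<exists>K. compact K \<and> K \<subseteq> U \<times> UNIV \<and> p \<in> interior K \<and>
        uniform_limit K (\<lambda>eps q. pansu_quot mG VG mH VH Phi (fst q) (snd q) eps)
                        (\<lambda>q. PD mG VG mH VH Phi (fst q) (snd q)) (at_right 0))"

end

theory Submission
  imports Defs
begin


section \<open>Gradings\<close>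

definition gN :: "(nat \<Rightarrow> 'g::euclidean_space set) \<Rightarrow> nat" where
  "gN V = (SOME N. \<forall>j>N. V j = {0})"

lemma gN: "graded_vs V \<Longrightarrow> j > gN V \<Longrightarrow> V j = {0}"
proof -
  assume a: "graded_vs V" "j > gN V"
  have "\<exists>N. \<forall>j>N. V j = {0}" using a(1) unfolding graded_vs_def by blast
  hence "\<forall>j>gN V. V j = {0}" unfolding gN_def by (rule someI_ex)
  thus ?thesis using a(2) by blast
qed

lemma gvs_subspace: "graded_vs V \<Longrightarrow> subspace (V j)"
  unfolding graded_vs_def by auto

lemma gvs_V0: "graded_vs V \<Longrightarrow> V 0 = {0}"
  unfolding graded_vs_def by auto

lemma gvs_unique:
  assumes "graded_vs V" "\<forall>j. c j \<in> V j" "finite S" "{j. c j \<noteq> 0} \<subseteq> S" "x = (\<Sum>j\<in>S. c j)"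
  shows "gcomp V x = c"
proof -
  let ?P = "\<lambda>c. (\<forall>j. c j \<in> V j) \<and> finite {j. c j \<noteq> 0} \<and> x = (\<Sum>j\<in>{j. c j \<noteq> 0}. c j)"
  have ex: "\<exists>!c. ?P c" using assms(1) unfolding graded_vs_def by blast
  have "(\<Sum>j\<in>S. c j) = (\<Sum>j\<in>{j. c j \<noteq> 0}. c j)"
    by (rule sum.mono_neutral_right[OF assms(3) assms(4)]) auto
  hence "x = (\<Sum>j\<in>{j. c j \<noteq> 0}. c j)" using assms(5) by simp
  moreover have "finite {j. c j \<noteq> 0}" using assms(3,4) by (rule finite_subset[rotated])
  ultimately have "?P c" using assms(2) by blast
  thus ?thesis unfolding gcomp_def using the1_equality[OF ex] by blast
qed

lemma gvs_P:
  assumes "graded_vs V"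
  shows "(\<forall>j. gcomp V x j \<in> V j) \<and> finite {j. gcomp V x j \<noteq> 0} \<and>
         x = (\<Sum>j\<in>{j. gcomp V x j \<noteq> 0}. gcomp V x j)"
proof -
  let ?P = "\<lambda>c. (\<forall>j. c j \<in> V j) \<and> finite {j. c j \<noteq> 0} \<and> x = (\<Sum>j\<in>{j. c j \<noteq> 0}. c j)"
  have ex: "\<exists>!c. ?P c" using assms(1) unfolding graded_vs_def by blast
  show ?thesis unfolding gcomp_def using theI'[OF ex] .
qed

lemma gcomp_in_V: "graded_vs V \<Longrightarrow> gcomp V x j \<in> V j"
  using gvs_P by blast

lemma gcomp_above: "graded_vs V \<Longrightarrow> j > gN V \<Longrightarrow> gcomp V x j = 0"
  using gcomp_in_V[of V x j] gN[of V j] by simp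

lemma gcomp_0: "graded_vs V \<Longrightarrow> gcomp V x 0 = 0"
  using gcomp_in_V[of V x 0] gvs_V0[of V] by simp

lemma supp_le: fixes n :: nat assumes "\<And>j. j > n \<Longrightarrow> c j = 0" shows "{j. c j \<noteq> 0} \<subseteq> {..n}"
proof
  fix j assume "j \<in> {j. c j \<noteq> 0}"
  hence "\<not> j > n" using assms by auto
  thus "j \<in> {..n}" by simp
qed

lemma gcomp_supp: "graded_vs V \<Longrightarrow> gN V \<le> n \<Longrightarrow> {j. gcomp V x j \<noteq> 0} \<subseteq> {..n}"
  by (rule supp_le) (simp add: gcomp_above)

lemma gcomp_sum: "graded_vs V \<Longrightarrow> gN V \<le> n \<Longrightarrow> x = (\<Sum>j\<le>n. gcomp V x j)"
proof -
  assume a: "graded_vs V" "gN V \<le> n"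
  have "x = (\<Sum>j\<in>{j. gcomp V x j \<noteq> 0}. gcomp V x j)" using gvs_P[OF a(1)] by blast
  also have "\<dots> = (\<Sum>j\<le>n. gcomp V x j)"
    using gcomp_supp[OF a] by (intro sum.mono_neutral_left) auto
  finally show ?thesis .
qed

lemma gcomp_add: assumes "graded_vs V" shows "gcomp V (x + y) = (\<lambda>j. gcomp V x j + gcomp V y j)"
proof (rule gvs_unique[OF assms, where S="{..gN V}"])
  show "\<forall>j. gcomp V x j + gcomp V y j \<in> V j"
    using gcomp_in_V[OF assms] gvs_subspace[OF assms] by (simp add: subspace_add)
  show "{j. gcomp V x j + gcomp V y j \<noteq> 0} \<subseteq> {..gN V}"
    by (rule supp_le) (simp add: gcomp_above[OF assms])
  show "x + y = (\<Sum>j\<le>gN V. gcomp V x j + gcomp V y j)"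
    using gcomp_sum[OF assms order_refl] by (simp add: sum.distrib)
qed auto

lemma gcomp_scale: assumes "graded_vs V" shows "gcomp V (c *\<^sub>R x) = (\<lambda>j. c *\<^sub>R gcomp V x j)"
proof (rule gvs_unique[OF assms, where S="{..gN V}"])
  show "\<forall>j. c *\<^sub>R gcomp V x j \<in> V j"
    using gcomp_in_V[OF assms] gvs_subspace[OF assms] by (simp add: subspace_scale)
  show "{j. c *\<^sub>R gcomp V x j \<noteq> 0} \<subseteq> {..gN V}"
    by (rule supp_le) (simp add: gcomp_above[OF assms])
  show "c *\<^sub>R x = (\<Sum>j\<le>gN V. c *\<^sub>R gcomp V x j)"
    using gcomp_sum[OF assms order_refl] by (metis scaleR_right.sum)
qed auto

lemma gcomp_in: assumes "graded_vs V" "x \<in> V j" shows "gcomp V x = (\<lambda>i. if i = j then x else 0)"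
proof (rule gvs_unique[OF assms(1), where S="{j}"])
  show "\<forall>i. (if i = j then x else 0) \<in> V i"
    using assms gvs_subspace[OF assms(1)] by (auto simp: subspace_0)
qed auto

lemma linear_gcomp: assumes "graded_vs V" shows "linear (\<lambda>x. gcomp V x j)"
  by (rule linearI) (simp_all add: gcomp_add[OF assms] gcomp_scale[OF assms])

lemma bounded_linear_gcomp: assumes "graded_vs V" shows "bounded_linear (\<lambda>x. gcomp V x j)"
  using linear_gcomp[OF assms] linear_conv_bounded_linear by blast

lemma gcomp_zero[simp]: assumes "graded_vs V" shows "gcomp V 0 j = 0"
  using linear_0[OF linear_gcomp[OF assms]] by simp

lemma dil_sum: assumes "graded_vs V" "gN V \<le> n"
  shows "dil V r x = (\<Sum>j\<le>n. (r ^ j) *\<^sub>R gcomp V x j)"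
  unfolding dil_def using gcomp_supp[OF assms]
  by (intro sum.mono_neutral_left) auto

lemma gcomp_dil: assumes "graded_vs V" shows "gcomp V (dil V r x) k = (r ^ k) *\<^sub>R gcomp V x k"
proof -
  have "gcomp V (dil V r x) = (\<lambda>j. (r ^ j) *\<^sub>R gcomp V x j)"
  proof (rule gvs_unique[OF assms, where S="{..gN V}"])
    show "\<forall>j. r ^ j *\<^sub>R gcomp V x j \<in> V j"
      using gcomp_in_V[OF assms] gvs_subspace[OF assms] by (simp add: subspace_scale)
    show "{j. r ^ j *\<^sub>R gcomp V x j \<noteq> 0} \<subseteq> {..gN V}"
      by (rule supp_le) (simp add: gcomp_above[OF assms])
  qed (auto simp: dil_sum[OF assms order_refl])
  thus ?thesis by simp
qed

lemma dil_in: assumes "graded_vs V" "x \<in> V j" shows "dil V r x = (r ^ j) *\<^sub>R x"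
proof (cases "j \<le> gN V")
  case True
  have "(\<Sum>i\<le>gN V. r^i *\<^sub>R (if i = j then x else 0)) = (\<Sum>i\<le>gN V. if i = j then r^j *\<^sub>R x else 0)"
    by (rule sum.cong) auto
  also have "\<dots> = r^j *\<^sub>R x" using True by (subst sum.delta) auto
  finally show ?thesis unfolding dil_sum[OF assms(1) order_refl] gcomp_in[OF assms] .
next
  case False
  hence "x = 0" using gN[OF assms(1)] assms(2) by auto
  thus ?thesis unfolding dil_sum[OF assms(1) order_refl] by (simp add: assms(1))
qed

lemma linear_dil: assumes "graded_vs V" shows "linear (dil V r)"
proof -
  have "dil V r = (\<lambda>x. \<Sum>j\<le>gN V. (r ^ j) *\<^sub>R gcomp V x j)"
    using dil_sum[OF assms order_refl] by auto
  moreover have "linear (\<lambda>x. \<Sum>j\<le>gN V. (r ^ j) *\<^sub>R gcomp V x j)"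
    by (rule linearI) (simp_all add: gcomp_add[OF assms] gcomp_scale[OF assms] sum.distrib
        scaleR_add_right scaleR_sum_right ac_simps)
  ultimately show ?thesis by simp
qed

lemma bounded_linear_dil: "graded_vs V \<Longrightarrow> bounded_linear (dil V r)"
  using linear_dil linear_conv_bounded_linear by blast

lemma dil_dil: assumes "graded_vs V" shows "dil V r (dil V s x) = dil V (r * s) x"
proof -
  have "dil V r (dil V s x) = (\<Sum>j\<le>gN V. (r ^ j) *\<^sub>R gcomp V (dil V s x) j)"
    by (rule dil_sum[OF assms order_refl])
  also have "\<dots> = (\<Sum>j\<le>gN V. ((r * s) ^ j) *\<^sub>R gcomp V x j)"
    by (simp add: gcomp_dil[OF assms] power_mult_distrib)
  also have "\<dots> = dil V (r * s) x" by (rule dil_sum[OF assms order_refl, symmetric])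
  finally show ?thesis .
qed

lemma dil_1: assumes "graded_vs V" shows "dil V 1 x = x"
  unfolding dil_sum[OF assms order_refl] using gcomp_sum[OF assms order_refl] by simp

lemma dil_0: assumes "graded_vs V" shows "dil V 0 x = 0"
proof -
  have z: "\<And>j. (0::real)^j *\<^sub>R gcomp V x j = 0" by (case_tac j) (auto simp: gcomp_0[OF assms])
  show ?thesis unfolding dil_sum[OF assms order_refl] by (intro sum.neutral ballI z)
qed

lemma dil_add: "graded_vs V \<Longrightarrow> dil V r (x + y) = dil V r x + dil V r y"
  using linear_add[OF linear_dil] by blast

lemma dil_scale: "graded_vs V \<Longrightarrow> dil V r (c *\<^sub>R x) = c *\<^sub>R dil V r x"
  using linear_scale[OF linear_dil] by blast

lemma continuous_dil: assumes "graded_vs V"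
  shows "continuous_on S (\<lambda>p. dil V (fst p) (snd p))"
proof -
  have "(\<lambda>p. dil V (fst p) (snd p)) = (\<lambda>p. \<Sum>j\<le>gN V. (fst p ^ j) *\<^sub>R gcomp V (snd p) j)"
    using dil_sum[OF assms order_refl] by auto
  moreover have "continuous_on S (\<lambda>p. \<Sum>j\<le>gN V. (fst p ^ j) *\<^sub>R gcomp V (snd p) j)"
    by (intro continuous_intros linear_continuous_on_compose[OF continuous_on_snd] 
        bounded_linear_gcomp[OF assms] linear_gcomp[OF assms])
  ultimately show ?thesis by (simp only:)
qed

lemma span_grading:
  assumes "graded_vs V"
  shows "span (\<Union>i\<in>{1..j}. V i) = {y. \<forall>k>j. gcomp V y k = 0}"
proof
  have sub: "subspace {y. \<forall>k>j. gcomp V y k = 0}"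
    unfolding subspace_def by (simp add: gcomp_add[OF assms] gcomp_scale[OF assms] gcomp_zero[OF assms])
  have "(\<Union>i\<in>{1..j}. V i) \<subseteq> {y. \<forall>k>j. gcomp V y k = 0}"
    using gcomp_in[OF assms] by auto
  thus "span (\<Union>i\<in>{1..j}. V i) \<subseteq> {y. \<forall>k>j. gcomp V y k = 0}"
    using sub by (simp add: span_minimal)
next
  show "{y. \<forall>k>j. gcomp V y k = 0} \<subseteq> span (\<Union>i\<in>{1..j}. V i)"
  proof
    fix y assume y: "y \<in> {y. \<forall>k>j. gcomp V y k = 0}"
    have "y = (\<Sum>k\<le>max j (gN V). gcomp V y k)" using gcomp_sum[OF assms] by simp
    also have "\<dots> = (\<Sum>k\<in>{1..j}. gcomp V y k)"
    proof (intro sum.mono_neutral_right ballI)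
      fix i assume "i \<in> {..max j (gN V)} - {1..j}"
      hence "i = 0 \<or> i > j" by auto
      thus "gcomp V y i = 0" using y gcomp_0[OF assms] by auto
    qed auto
    also have "\<dots> \<in> span (\<Union>i\<in>{1..j}. V i)"
    proof (intro span_sum)
      fix i assume "i \<in> {1..j}"
      thus "gcomp V y i \<in> span (\<Union>i\<in>{1..j}. V i)"
        by (intro span_base) (use gcomp_in_V[OF assms] in blast)
    qed
    finally show "y \<in> span (\<Union>i\<in>{1..j}. V i)" .
  qed
qed




section \<open>C^k functions\<close>

fun ck :: "nat \<Rightarrow> 'a::euclidean_space set \<Rightarrow> ('a \<Rightarrow> 'b::euclidean_space) \<Rightarrow> bool" where
  "ck 0 U f = continuous_on U f"
| "ck (Suc k) U f = (\<exists>f'. (\<forall>x\<in>U. (f has_derivative f' x) (at x)) \<and> (\<forall>v. ck k U (\<lambda>x. f' x v)))"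

lemma ckI: "(\<And>x. x\<in>U \<Longrightarrow> (f has_derivative f' x) (at x)) \<Longrightarrow> (\<And>v. ck k U (\<lambda>x. f' x v)) \<Longrightarrow> ck (Suc k) U f"
  by auto

lemma fd_eq: "(f has_derivative f') (at x) \<Longrightarrow> frechet_derivative f (at x) = f'"
  using frechet_derivative_at by metis

lemma fd_works: "f differentiable (at x) \<Longrightarrow> (f has_derivative frechet_derivative f (at x)) (at x)"
  using frechet_derivative_works by blast

lemma ck_cong: "open U \<Longrightarrow> (\<And>x. x\<in>U \<Longrightarrow> f x = g x) \<Longrightarrow> ck k U f \<Longrightarrow> ck k U g"
proof (induction k arbitrary: f g)
  case 0 thus ?case using continuous_on_eq[of U f g] by simp
next
  case (Suc k)
  obtain f' where f': "\<forall>x\<in>U. (f has_derivative f' x) (at x)" "\<forall>v. ck k U (\<lambda>x. f' x v)"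
    using Suc.prems(3) unfolding ck.simps by blast
  have "(g has_derivative f' x) (at x)" if x: "x\<in>U" for x
    by (rule has_derivative_transform_within_open[OF f'(1)[rule_format, OF x] Suc.prems(1) x]) (use Suc.prems(2) in auto)
  thus ?case using f'(2) by auto
qed

lemma ck_Suc_imp: "ck (Suc k) U f \<Longrightarrow> ck k U f"
proof (induction k arbitrary: f)
  case 0
  hence "\<forall>x\<in>U. isCont f x" using has_derivative_continuous by force
  thus ?case by (simp add: continuous_at_imp_continuous_on)
next
  case (Suc k)
  obtain f' where f': "\<forall>x\<in>U. (f has_derivative f' x) (at x)" "\<forall>v. ck (Suc k) U (\<lambda>x. f' x v)"
    using Suc.prems by (simp only: ck.simps) blast
  thus ?case using Suc.IH by auto
qed

lemma ck_le: "k \<le> k' \<Longrightarrow> ck k' U f \<Longrightarrow> ck k U f"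
proof (induction k' rule: dec_induct)
  case base thus ?case .
next
  case (step n) thus ?case using ck_Suc_imp by blast
qed

lemma ck_continuous: "ck k U f \<Longrightarrow> continuous_on U f"
  using ck_le[of 0 k] by auto

lemma ck_diff: "ck (Suc k) U f \<Longrightarrow> x \<in> U \<Longrightarrow> (f has_derivative frechet_derivative f (at x)) (at x)"
  using fd_eq by fastforce

lemma ck_fd: assumes "open U" "ck (Suc k) U f" shows "ck k U (\<lambda>x. frechet_derivative f (at x) v)"
proof -
  obtain f' where f': "\<forall>x\<in>U. (f has_derivative f' x) (at x)" "\<forall>v. ck k U (\<lambda>x. f' x v)"
    using assms(2) unfolding ck.simps by blast
  show ?thesis using f'(2)[rule_format, of v] by (rule ck_cong[OF assms(1), rotated]) (simp add: fd_eq[OF f'(1)[rule_format]])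
qed

lemma ck_subset: "W \<subseteq> U \<Longrightarrow> ck k U f \<Longrightarrow> ck k W f"
proof (induction k arbitrary: f)
  case 0 thus ?case using continuous_on_subset by auto
next
  case (Suc k)
  obtain f' where f': "\<forall>x\<in>U. (f has_derivative f' x) (at x)" "\<forall>v. ck k U (\<lambda>x. f' x v)"
    using Suc.prems(2) unfolding ck.simps by blast
  have "\<forall>x\<in>W. (f has_derivative f' x) (at x)" using f'(1) Suc.prems(1) by blast
  moreover have "\<forall>v. ck k W (\<lambda>x. f' x v)" using f'(2) Suc.IH[OF Suc.prems(1)] by blast
  ultimately show ?case by auto
qed

lemma ck_const: "ck k U (\<lambda>x. c)"
proof (induction k arbitrary: c)
  case 0 thus ?case by simp
next
  case (Suc k)
  show ?case by (rule ckI[where f'="\<lambda>x v. 0"]) (simp_all add: Suc)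
qed

lemma ck_linear: "bounded_linear L \<Longrightarrow> ck k U f \<Longrightarrow> ck k U (\<lambda>x. L (f x))"
proof (induction k arbitrary: f)
  case 0 thus ?case by (simp add: bounded_linear.continuous_on)
next
  case (Suc k)
  obtain f' where f': "\<forall>x\<in>U. (f has_derivative f' x) (at x)" "\<forall>v. ck k U (\<lambda>x. f' x v)"
    using Suc.prems(2) unfolding ck.simps by blast
  show ?case
  proof (rule ckI[where f'="\<lambda>x v. L (f' x v)"])
    show "((\<lambda>x. L (f x)) has_derivative (\<lambda>v. L (f' x v))) (at x)" if "x \<in> U" for x
      using f'(1) that bounded_linear.has_derivative[OF Suc.prems(1)] by blast
    show "ck k U (\<lambda>x. L (f' x v))" for v using Suc.IH[OF Suc.prems(1)] f'(2) by blast
  qed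
qed

lemma ck_add: "ck k U f \<Longrightarrow> ck k U g \<Longrightarrow> ck k U (\<lambda>x. f x + g x)"
proof (induction k arbitrary: f g)
  case 0 thus ?case by (simp add: continuous_on_add)
next
  case (Suc k)
  obtain f' where f': "\<forall>x\<in>U. (f has_derivative f' x) (at x)" "\<forall>v. ck k U (\<lambda>x. f' x v)"
    using Suc.prems(1) unfolding ck.simps by blast
  obtain g' where g': "\<forall>x\<in>U. (g has_derivative g' x) (at x)" "\<forall>v. ck k U (\<lambda>x. g' x v)"
    using Suc.prems(2) unfolding ck.simps by blast
  show ?case
  proof (rule ckI[where f'="\<lambda>x v. f' x v + g' x v"])
    show "((\<lambda>x. f x + g x) has_derivative (\<lambda>v. f' x v + g' x v)) (at x)" if "x \<in> U" for x
      using f'(1) g'(1) that by (simp add: has_derivative_add)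
    show "ck k U (\<lambda>x. f' x v + g' x v)" for v using Suc.IH f'(2) g'(2) by blast
  qed
qed

lemma ck_scaleR: "ck k U a \<Longrightarrow> ck k U f \<Longrightarrow> ck k U (\<lambda>x. a x *\<^sub>R f x)"
proof (induction k arbitrary: a f)
  case 0 thus ?case by (simp add: continuous_on_scaleR)
next
  case (Suc k)
  obtain a' where a': "\<forall>x\<in>U. (a has_derivative a' x) (at x)" "\<forall>v. ck k U (\<lambda>x. a' x v)"
    using Suc.prems(1) unfolding ck.simps by blast
  obtain f' where f': "\<forall>x\<in>U. (f has_derivative f' x) (at x)" "\<forall>v. ck k U (\<lambda>x. f' x v)"
    using Suc.prems(2) unfolding ck.simps by blast
  show ?case
  proof (rule ckI[where f'="\<lambda>x v. a x *\<^sub>R f' x v + a' x v *\<^sub>R f x"])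
    show "((\<lambda>x. a x *\<^sub>R f x) has_derivative (\<lambda>v. a x *\<^sub>R f' x v + a' x v *\<^sub>R f x)) (at x)"
      if "x \<in> U" for x
      using a'(1) f'(1) that has_derivative_scaleR by blast
    show "ck k U (\<lambda>x. a x *\<^sub>R f' x v + a' x v *\<^sub>R f x)" for v
      using Suc.IH a'(2) f'(2) ck_Suc_imp[OF Suc.prems(1)] ck_Suc_imp[OF Suc.prems(2)] ck_add by blast
  qed
qed

lemma ck_sum: "finite I \<Longrightarrow> (\<And>i. i \<in> I \<Longrightarrow> ck k U (f i)) \<Longrightarrow> ck k U (\<lambda>x. \<Sum>i\<in>I. f i x)"
proof (induction I rule: finite_induct)
  case empty thus ?case by (simp add: ck_const)
next
  case (insert i I) thus ?case by (simp add: ck_add)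
qed

lemma linear_basis_expand: "linear L \<Longrightarrow> L w = (\<Sum>i\<in>Basis. (w \<bullet> i) *\<^sub>R L i)"
proof -
  assume l: "linear L"
  have "L w = L (\<Sum>i\<in>Basis. (w \<bullet> i) *\<^sub>R i)" by (simp add: euclidean_representation)
  also have "\<dots> = (\<Sum>i\<in>Basis. (w \<bullet> i) *\<^sub>R L i)" by (simp add: linear_sum[OF l] linear_scale[OF l])
  finally show ?thesis .
qed

lemma ck_inner: "ck k U f \<Longrightarrow> ck k U (\<lambda>x. f x \<bullet> i)"
  using ck_linear[OF bounded_linear_inner_left] by blast

lemma ck_compose: "open U \<Longrightarrow> ck k V g \<Longrightarrow> ck k U f \<Longrightarrow> f ` U \<subseteq> V \<Longrightarrow> ck k U (\<lambda>x. g (f x))"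
proof (induction k arbitrary: f g)
  case 0 thus ?case by (auto intro: continuous_on_compose2)
next
  case (Suc k)
  obtain g' where g': "\<forall>y\<in>V. (g has_derivative g' y) (at y)" "\<forall>v. ck k V (\<lambda>y. g' y v)"
    using Suc.prems(2) unfolding ck.simps by blast
  obtain f' where f': "\<forall>x\<in>U. (f has_derivative f' x) (at x)" "\<forall>v. ck k U (\<lambda>x. f' x v)"
    using Suc.prems(3) unfolding ck.simps by blast
  show ?case
  proof (rule ckI[where f'="\<lambda>x v. g' (f x) (f' x v)"])
    show "((\<lambda>x. g (f x)) has_derivative (\<lambda>v. g' (f x) (f' x v))) (at x)" if "x\<in>U" for x
      using has_derivative_compose[OF f'(1)[rule_format, OF that] g'(1)[rule_format]] Suc.prems(4) that
      by blast
    show "ck k U (\<lambda>x. g' (f x) (f' x v))" for v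
    proof -
      have ci: "ck k U (\<lambda>x. (f' x v \<bullet> i) *\<^sub>R g' (f x) i)" for i
      proof (rule ck_scaleR)
        show "ck k U (\<lambda>x. f' x v \<bullet> i)" using f'(2) by (simp add: ck_inner)
        show "ck k U (\<lambda>x. g' (f x) i)"
          by (rule Suc.IH[OF Suc.prems(1) _ ck_Suc_imp[OF Suc.prems(3)] Suc.prems(4)]) (use g'(2) in blast)
      qed
      have "ck k U (\<lambda>x. \<Sum>i\<in>Basis. (f' x v \<bullet> i) *\<^sub>R g' (f x) i)"
        by (rule ck_sum[OF finite_Basis, where f="\<lambda>i x. (f' x v \<bullet> i) *\<^sub>R g' (f x) i"], rule ci)
      moreover have "(\<Sum>i\<in>Basis. (f' x v \<bullet> i) *\<^sub>R g' (f x) i) = g' (f x) (f' x v)" if "x \<in> U" for x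
      proof -
        have "f x \<in> V" using Suc.prems(4) that by blast
        hence lin: "linear (g' (f x))" using has_derivative_linear g'(1) by blast
        show ?thesis by (rule linear_basis_expand[OF lin, symmetric])
      qed
      ultimately show ?thesis by (rule ck_cong[OF Suc.prems(1), rotated]) 
    qed
  qed
qed

lemma ck_pair: "ck k U f \<Longrightarrow> ck k U g \<Longrightarrow> ck k U (\<lambda>x. (f x, g x))"
proof -
  assume f: "ck k U f" and g: "ck k U g"
  have "ck k U (\<lambda>x. (f x, 0) + (0, g x))"
    by (intro ck_add ck_linear[OF _ f] ck_linear[OF _ g] bounded_linear_Pair bounded_linear_ident bounded_linear_zero)
  thus ?thesis by simp
qed

lemma ck_fst: "ck k U f \<Longrightarrow> ck k U (\<lambda>x. fst (f x))"
  by (rule ck_linear[OF bounded_linear_fst])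

lemma ck_snd: "ck k U f \<Longrightarrow> ck k U (\<lambda>x. snd (f x))"
  by (rule ck_linear[OF bounded_linear_snd])

lemma ck_id: "ck k U (\<lambda>x. x)"
proof (induction k)
  case 0 thus ?case by simp
next
  case (Suc k)
  show ?case by (rule ckI[where f'="\<lambda>x v. v"]) (simp_all add: ck_const)
qed

lemma ck_bl: "bounded_linear L \<Longrightarrow> ck k U L"
  using ck_linear[OF _ ck_id] by blast

lemma ck_deriv_joint:
  assumes "open U" "ck (Suc k) U f"
  shows "ck k (U \<times> UNIV) (\<lambda>p. frechet_derivative f (at (fst p)) (snd p))"
proof -
  obtain f' where f': "\<forall>x\<in>U. (f has_derivative f' x) (at x)" "\<forall>v. ck k U (\<lambda>x. f' x v)"
    using assms(2) unfolding ck.simps by blast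
  have o: "open (U \<times> (UNIV :: 'a set))" using assms(1) by (simp add: open_Times)
  have "ck k (U \<times> (UNIV::'a set)) (\<lambda>p. \<Sum>i\<in>Basis. (snd p \<bullet> i) *\<^sub>R f' (fst p) i)"
  proof (intro ck_sum ck_scaleR ck_inner ck_snd ck_id)
    fix i :: 'a
    have fs: "ck k (U \<times> (UNIV::'a set)) (\<lambda>p. fst p)" by (rule ck_fst[OF ck_id])
    show "ck k (U \<times> (UNIV::'a set)) (\<lambda>p. f' (fst p) i)"
      by (rule ck_compose[OF o f'(2)[rule_format, of i] fs]) auto
  qed auto
  moreover have "(\<Sum>i\<in>Basis. (snd p \<bullet> i) *\<^sub>R f' (fst p) i) = frechet_derivative f (at (fst p)) (snd p)"
    if "p \<in> U \<times> UNIV" for p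
  proof -
    have h: "(f has_derivative f' (fst p)) (at (fst p))" using f'(1) that by auto
    show ?thesis unfolding fd_eq[OF h] by (rule linear_basis_expand[OF has_derivative_linear[OF h], symmetric])
  qed
  ultimately show ?thesis by (rule ck_cong[OF o, rotated])
qed

lemma smooth_on_ck: assumes "smooth_on U f" shows "ck k U f"
proof -
  obtain D where D: "D [] = f" "\<forall>ds. \<forall>x\<in>U. (D ds has_derivative (\<lambda>v. D (v # ds) x)) (at x)"
    using assms unfolding smooth_on_def by blast
  have "ck k U (D ds)" for ds
  proof (induction k arbitrary: ds)
    case 0
    have "\<forall>x\<in>U. isCont (D ds) x" using D(2) has_derivative_continuous by blast
    thus ?case by (simp add: continuous_at_imp_continuous_on)
  next
    case (Suc k)
    show ?case by (rule ckI[where f'="\<lambda>x v. D (v # ds) x"]) (use D(2) Suc in auto)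
  qed
  thus ?thesis using D(1) by metis
qed

lemma ck_smooth_on: assumes "open U" "\<And>k. ck k U f" shows "smooth_on U f"
proof -
  define D where "D ds = foldr (\<lambda>v g x. frechet_derivative g (at x) v) ds f" for ds
  have ck: "ck k U (D ds)" for k ds
  proof (induction ds arbitrary: k)
    case Nil thus ?case using assms(2) by (simp add: D_def)
  next
    case (Cons v ds)
    have "D (v # ds) = (\<lambda>x. frechet_derivative (D ds) (at x) v)" by (simp add: D_def)
    thus ?case using ck_fd[OF assms(1) Cons[of "Suc k"]] by simp
  qed
  have "(D ds has_derivative (\<lambda>v. D (v # ds) x)) (at x)" if "x \<in> U" for ds x
  proof -
    have "(D ds has_derivative frechet_derivative (D ds) (at x)) (at x)"
      using ck_diff[OF ck[of "Suc 0" ds] that] .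
    moreover have "frechet_derivative (D ds) (at x) = (\<lambda>v. D (v # ds) x)"
      by (simp add: D_def)
    ultimately show ?thesis by simp
  qed
  moreover have "D [] = f" by (simp add: D_def)
  ultimately show ?thesis unfolding smooth_on_def by blast
qed




section \<open>Group structure\<close>

definition mm :: "('g \<Rightarrow> 'g \<Rightarrow> 'g) \<Rightarrow> 'g \<times> 'g \<Rightarrow> 'g" where
  "mm m = (\<lambda>p. m (fst p) (snd p))"

definition pdj :: "('g::euclidean_space \<Rightarrow> 'g \<Rightarrow> 'g) \<Rightarrow> ('g \<times> 'g) \<times> ('g \<times> 'g) \<Rightarrow> 'g" where
  "pdj m q = frechet_derivative (mm m) (at (fst q)) (snd q)"

definition pd :: "('g::euclidean_space \<Rightarrow> 'g \<Rightarrow> 'g) \<Rightarrow> 'g \<Rightarrow> 'g \<Rightarrow> 'g \<Rightarrow> 'g" where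
  "pd m a w v = pdj m ((a, w), (0, v))"

context
  fixes m :: "'g::euclidean_space \<Rightarrow> 'g \<Rightarrow> 'g" and V :: "nat \<Rightarrow> 'g set"
  assumes gg: "graded_group m V"
begin

lemma gg_assoc: "m (m x y) z = m x (m y z)"
  using gg unfolding graded_group_def by blast

lemma gg_line: "m (s *\<^sub>R X) (t *\<^sub>R X) = (s + t) *\<^sub>R X"
  using gg unfolding graded_group_def by blast

lemma gg_gvs: "graded_vs V"
  using gg unfolding graded_group_def by blast

lemma gg_dil: "r > 0 \<Longrightarrow> dil V r (m x y) = m (dil V r x) (dil V r y)"
  using gg unfolding graded_group_def by blast

lemma gg_ck: "ck k UNIV (mm m)"
  using gg smooth_on_ck unfolding graded_group_def mm_def by blast

lemma m_0_left[simp]: "m 0 y = y"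
  using gg_line[of 0 y 1] by simp

lemma m_0_right[simp]: "m y 0 = y"
  using gg_line[of 1 y 0] by simp

lemma m_inv_left[simp]: "m (- y) y = 0"
  using gg_line[of "-1" y 1] by simp

lemma m_inv_right[simp]: "m y (- y) = 0"
  using gg_line[of 1 y "-1"] by simp

lemma m_cancel1[simp]: "m (- a) (m a w) = w"
  by (simp flip: gg_assoc)

lemma m_cancel2[simp]: "m a (m (- a) w) = w"
  by (simp flip: gg_assoc)

lemma continuous_mm: "continuous_on S (mm m)"
  using ck_continuous[OF gg_ck[of 0]] continuous_on_subset by blast

lemma mm_deriv: "(mm m has_derivative frechet_derivative (mm m) (at p)) (at p)"
  using ck_diff[OF gg_ck[of "Suc 0"] UNIV_I] .

lemma ck_pdj: "ck k UNIV (pdj m)"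
proof -
  have "ck k (UNIV \<times> UNIV) (\<lambda>q. frechet_derivative (mm m) (at (fst q)) (snd q))"
    by (rule ck_deriv_joint[OF open_UNIV gg_ck])
  thus ?thesis unfolding pdj_def by simp
qed

lemma left_deriv: "(m a has_derivative (\<lambda>v. pd m a w v)) (at w)"
proof -
  have p: "((\<lambda>w. (a, w)) has_derivative (\<lambda>v. (0, v))) (at w)"
    by (intro derivative_eq_intros) auto
  have "((\<lambda>w. mm m (a, w)) has_derivative (\<lambda>v. frechet_derivative (mm m) (at (a, w)) (0, v))) (at w)"
    using has_derivative_compose[OF p mm_deriv] by simp
  thus ?thesis unfolding pd_def pdj_def mm_def by simp
qed

lemma fd_left: "frechet_derivative (m a) (at w) = (\<lambda>v. pd m a w v)"
  using fd_eq[OF left_deriv] .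

lemma tau_eq: "tau m a = (\<lambda>v. pd m a 0 v)"
  unfolding tau_def fd_left ..

lemma linear_pd: "linear (\<lambda>v. pd m a w v)"
  using has_derivative_linear[OF left_deriv] .

lemma tau_inv1: "pd m a 0 (pd m (- a) a v) = v"
proof -
  have d1: "((\<lambda>w. m a (m (- a) w)) has_derivative (\<lambda>v. pd m a 0 (pd m (- a) a v))) (at a)"
    using has_derivative_compose[OF left_deriv[of "- a" a] left_deriv[of a "m (- a) a"]] by simp
  have d2: "((\<lambda>w. m a (m (- a) w)) has_derivative (\<lambda>v. v)) (at a)" by simp
  show ?thesis using has_derivative_unique[OF d1 d2] by metis
qed

lemma tau_inv2: "pd m (- a) a (pd m a 0 v) = v"
proof -
  have d1: "((\<lambda>w. m (- a) (m a w)) has_derivative (\<lambda>v. pd m (- a) a (pd m a 0 v))) (at 0)"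
    using has_derivative_compose[OF left_deriv[of a 0] left_deriv[of "- a" "m a 0"]] by simp
  have d2: "((\<lambda>w. m (- a) (m a w)) has_derivative (\<lambda>v. v)) (at 0)" by simp
  show ?thesis using has_derivative_unique[OF d1 d2] by metis
qed

lemma inv_tau: "inv (tau m a) = (\<lambda>v. pd m (- a) a v)"
  unfolding tau_eq by (rule inv_unique_comp) (auto simp: tau_inv1 tau_inv2 fun_eq_iff)

lemma tau_trans: "pd m a b (pd m b 0 v) = pd m (m a b) 0 v"
proof -
  have d1: "((\<lambda>w. m a (m b w)) has_derivative (\<lambda>v. pd m a b (pd m b 0 v))) (at 0)"
    using has_derivative_compose[OF left_deriv[of b 0] left_deriv[of a "m b 0"]] by simp
  have e: "(\<lambda>w. m a (m b w)) = m (m a b)" by (auto simp: gg_assoc)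
  have d2: "((\<lambda>w. m a (m b w)) has_derivative (\<lambda>v. pd m (m a b) 0 v)) (at 0)"
    unfolding e by (rule left_deriv)
  show ?thesis using has_derivative_unique[OF d1 d2] by metis
qed

lemma pd_via_tau: "pd m a b v = pd m (m a b) 0 (pd m (- b) b v)"
  using tau_trans[of a b "pd m (- b) b v"] by (simp add: tau_inv1)

lemma tau_dil: assumes "r > 0" shows "dil V r (pd m b 0 v) = pd m (dil V r b) 0 (dil V r v)"
proof -
  have bl: "bounded_linear (dil V r)" by (rule bounded_linear_dil[OF gg_gvs])
  have d1: "((\<lambda>w. dil V r (m b w)) has_derivative (\<lambda>v. dil V r (pd m b 0 v))) (at 0)"
    using bounded_linear.has_derivative[OF bl left_deriv[of b 0]] by simp
  have dd: "(dil V r has_derivative dil V r) (at 0)" using bl bounded_linear_imp_has_derivative by blast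
  have "dil V r 0 = 0" using linear_0[OF linear_dil[OF gg_gvs]] .
  hence d2: "((\<lambda>w. m (dil V r b) (dil V r w)) has_derivative (\<lambda>v. pd m (dil V r b) 0 (dil V r v))) (at 0)"
    using has_derivative_compose[OF dd left_deriv[of "dil V r b" "dil V r 0"]] by simp
  have e: "(\<lambda>w. m (dil V r b) (dil V r w)) = (\<lambda>w. dil V r (m b w))" using gg_dil[OF assms] by auto
  show ?thesis using has_derivative_unique[OF d1 d2[unfolded e]] by metis
qed

lemma tau_line: "pd m (t *\<^sub>R w) 0 w = w"
proof -
  have ds: "((\<lambda>s. s *\<^sub>R w) has_derivative (\<lambda>h. h *\<^sub>R w)) (at 0)"
    by (intro derivative_eq_intros) auto
  have d1: "((\<lambda>s::real. m (t *\<^sub>R w) (s *\<^sub>R w)) has_derivative (\<lambda>h. pd m (t *\<^sub>R w) 0 (h *\<^sub>R w))) (at 0)"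
    using has_derivative_compose[OF ds left_deriv[of "t *\<^sub>R w" "0 *\<^sub>R w"]] by simp
  have d2: "((\<lambda>s::real. m (t *\<^sub>R w) (s *\<^sub>R w)) has_derivative (\<lambda>h. h *\<^sub>R w)) (at 0)"
    unfolding gg_line by (intro derivative_eq_intros) auto
  show ?thesis using has_derivative_unique[OF d1 d2] by (metis scaleR_one)
qed

end




lemma linear_norm_bound:
  fixes L :: "'a::euclidean_space \<Rightarrow> 'b::real_normed_vector"
  assumes "linear L"
  shows "norm (L v) \<le> norm v * (\<Sum>l\<in>Basis. norm (L l))"
proof -
  have eq: "L v = (\<Sum>l\<in>Basis. (v \<bullet> l) *\<^sub>R L l)"
  proof -
    have "L v = L (\<Sum>l\<in>Basis. (v \<bullet> l) *\<^sub>R l)" by (simp add: euclidean_representation)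
    also have "\<dots> = (\<Sum>l\<in>Basis. (v \<bullet> l) *\<^sub>R L l)" by (simp add: linear_sum[OF assms] linear_scale[OF assms])
    finally show ?thesis .
  qed
  have "norm (L v) \<le> (\<Sum>l\<in>Basis. norm ((v \<bullet> l) *\<^sub>R L l))" unfolding eq by (rule norm_sum)
  also have "\<dots> \<le> (\<Sum>l\<in>Basis. norm v * norm (L l))"
    by (intro sum_mono) (simp add: Basis_le_norm mult_right_mono)
  also have "\<dots> = norm v * (\<Sum>l\<in>Basis. norm (L l))" by (simp add: sum_distrib_left)
  finally show ?thesis .
qed

lemma compact_bound:
  fixes g :: "'a::metric_space \<Rightarrow> 'b::real_normed_vector"
  assumes "compact S" "continuous_on S g"
  shows "\<exists>B\<ge>0. \<forall>y\<in>S. norm (g y) \<le> B"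
proof -
  have "bounded (g ` S)" by (rule compact_imp_bounded[OF compact_continuous_image[OF assms(2,1)]])
  then obtain B where "\<forall>y\<in>S. norm (g y) \<le> B" unfolding bounded_iff by auto
  thus ?thesis by (intro exI[of _ "max B 0"]) force
qed

lemma lip_family:
  fixes g :: "'i \<Rightarrow> 'a::euclidean_space \<Rightarrow> 'b::euclidean_space"
  assumes "finite I" "\<And>i. i \<in> I \<Longrightarrow> ck (Suc 0) UNIV (g i)" "convex S" "compact S"
  shows "\<exists>L\<ge>0. \<forall>i\<in>I. \<forall>y\<in>S. \<forall>y'\<in>S. norm (g i y - g i y') \<le> L * norm (y - y')"
proof -
  define h where "h y = (\<Sum>i\<in>I. \<Sum>l\<in>Basis. norm (frechet_derivative (g i) (at y) l))" for y
  have "continuous_on S (\<lambda>y. frechet_derivative (g i) (at y) l)" if "i \<in> I" for i l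
    using ck_continuous[OF ck_fd[OF open_UNIV assms(2)[OF that]]] continuous_on_subset by blast
  hence "continuous_on S h" unfolding h_def
    by (intro continuous_on_sum continuous_on_norm) auto
  then obtain B where B: "B \<ge> 0" "\<forall>y\<in>S. norm (h y) \<le> B" using compact_bound[OF assms(4)] by blast
  have "norm (g i y - g i y') \<le> B * norm (y - y')" if i: "i \<in> I" and y: "y \<in> S" "y' \<in> S" for i y y'
  proof (rule differentiable_bound[OF assms(3) _ _ y])
    fix x assume x: "x \<in> S"
    show "(g i has_derivative frechet_derivative (g i) (at x)) (at x within S)"
      using ck_diff[OF assms(2)[OF i] UNIV_I] has_derivative_subset by blast
    show "onorm (frechet_derivative (g i) (at x)) \<le> B"
    proof (rule onorm_le)
      fix v
      have lin: "linear (frechet_derivative (g i) (at x))"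
        using has_derivative_linear[OF ck_diff[OF assms(2)[OF i] UNIV_I]] .
      have "norm (frechet_derivative (g i) (at x) v) \<le> norm v * (\<Sum>l\<in>Basis. norm (frechet_derivative (g i) (at x) l))"
        by (rule linear_norm_bound[OF lin])
      also have "(\<Sum>l\<in>Basis. norm (frechet_derivative (g i) (at x) l)) \<le> h x"
        unfolding h_def using i assms(1) by (intro member_le_sum) (auto intro: sum_nonneg)
      also have "h x \<le> B" using B(2) x by auto
      finally have "norm (frechet_derivative (g i) (at x) v) \<le> norm v * B"
        by (simp add: mult_left_mono)
      thus "norm (frechet_derivative (g i) (at x) v) \<le> B * norm v" by (simp add: mult.commute)
    qed
  qed
  thus ?thesis using B(1) by blast
qed




definition gw_const :: "real \<Rightarrow> real" where
  "gw_const \<beta> = 2 * 4 ^ (nat \<lceil>2 * \<beta>\<rceil> + 1)"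

lemma gw_const_pos: "gw_const \<beta> > 0"
  unfolding gw_const_def by simp

lemma gronwall_step:
  fixes e e' :: "real \<Rightarrow> 'a::real_normed_vector"
  assumes a: "0 \<le> \<alpha>" and b: "0 \<le> \<beta>" and T: "0 < T" "T \<le> 1" and e0: "e 0 = 0"
    and der: "\<And>t. t \<in> {0..T} \<Longrightarrow> (e has_vector_derivative e' t) (at t within {0..T})"
    and bd: "\<And>t. t \<in> {0..T} \<Longrightarrow> norm (e' t) \<le> \<alpha> + \<beta> * norm (e t)"
  shows "\<And>t. t \<in> {0..T} \<Longrightarrow> norm (e t) \<le> gw_const \<beta> * \<alpha>"
proof -
  define n where "n = nat \<lceil>2 * \<beta>\<rceil> + 1"
  define h where "h = T / n"
  have n1: "n \<ge> 1" unfolding n_def by simp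
  have n2: "real n \<ge> 2 * \<beta>" unfolding n_def by linarith
  have h0: "h > 0" unfolding h_def using T n1 by simp
  have h1: "h \<le> 1" unfolding h_def using T n1 by (simp add: divide_le_eq)
  have nh: "real n * h = T" unfolding h_def using n1 by simp
  have bh: "\<beta> * h \<le> 1 / 2"
  proof -
    have "\<beta> * h \<le> \<beta> * (1 / n)" unfolding h_def using T b n1 by (intro mult_left_mono) (auto simp: divide_right_mono)
    also have "\<dots> \<le> 1/2" using n2 n1 by (simp add: field_simps)
    finally show ?thesis .
  qed
  have cont: "continuous_on {0..T} e"
    using der by (intro has_derivative_continuous_on) (auto simp: has_vector_derivative_def)
  have claim: "\<forall>t\<in>{0..real i * h}. norm (e t) \<le> 4 ^ i * 2 * h * \<alpha>" if "i \<le> n" for i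
    using that
  proof (induction i)
    case 0 thus ?case using e0 a h0 by auto
  next
    case (Suc i)
    define lo where "lo = real i * h"
    define hi where "hi = real (Suc i) * h"
    have sn: "real (Suc i) \<le> real n" using Suc.prems by simp
    have "hi \<le> T" unfolding hi_def nh[symmetric] using sn h0 by (intro mult_right_mono) auto
    moreover have "0 \<le> lo" "lo \<le> hi" "hi = lo + h"
      unfolding lo_def hi_def using h0 by (auto simp: distrib_right)
    ultimately have lohi: "0 \<le> lo" "lo \<le> hi" "hi \<le> T" "hi = lo + h" by auto
    have IH: "\<forall>t\<in>{0..lo}. norm (e t) \<le> 4 ^ i * 2 * h * \<alpha>" using Suc lo_def by auto
    have sub: "{lo..hi} \<subseteq> {0..T}" using lohi by auto
    obtain ts where ts: "ts \<in> {lo..hi}" "\<forall>t\<in>{lo..hi}. norm (e t) \<le> norm (e ts)"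
      using continuous_attains_sup[of "{lo..hi}" "\<lambda>t. norm (e t)"] lohi
        continuous_on_norm[OF continuous_on_subset[OF cont sub]] by auto
    define M where "M = norm (e ts)"
    have "norm (e ts - e lo) \<le> (\<alpha> + \<beta> * M) * norm (ts - lo)"
    proof (rule differentiable_bound[where f'="\<lambda>t s. s *\<^sub>R e' t" and S="{lo..ts}"])
      show "convex {lo..ts}" by simp
      show "ts \<in> {lo..ts}" "lo \<in> {lo..ts}" using ts by auto
      fix x assume x: "x \<in> {lo..ts}"
      hence x': "x \<in> {0..T}" using ts sub by auto
      show "(e has_derivative (\<lambda>s. s *\<^sub>R e' x)) (at x within {lo..ts})"
        using der[OF x'] has_derivative_subset sub ts unfolding has_vector_derivative_def
        by (metis atLeastAtMost_iff order.trans subsetI x')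
      have "norm (e' x) \<le> \<alpha> + \<beta> * M"
        using bd[OF x'] ts x b unfolding M_def
        by (smt (verit, best) atLeastAtMost_iff mult_left_mono)
      thus "onorm (\<lambda>s. s *\<^sub>R e' x) \<le> \<alpha> + \<beta> * M"
        by (intro onorm_le) (simp add: mult.commute mult_left_mono)
    qed
    hence "M \<le> norm (e lo) + (\<alpha> + \<beta> * M) * h"
    proof -
      assume "norm (e ts - e lo) \<le> (\<alpha> + \<beta> * M) * norm (ts - lo)"
      moreover have "norm (ts - lo) \<le> h" using ts lohi by auto
      moreover have "0 \<le> \<alpha> + \<beta> * M" using a b unfolding M_def by simp
      ultimately have "norm (e ts - e lo) \<le> (\<alpha> + \<beta> * M) * h"
        by (meson mult_left_mono order_trans)
      moreover have "M \<le> norm (e lo) + norm (e ts - e lo)" unfolding M_def by (metis norm_triangle_sub)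
      ultimately show ?thesis by linarith
    qed
    hence "M * (1 - \<beta> * h) \<le> norm (e lo) + \<alpha> * h" by (simp add: algebra_simps)
    moreover have "M * (1 - \<beta> * h) \<ge> M / 2"
    proof -
      have "M \<ge> 0" unfolding M_def by simp
      hence "M * (1/2) \<le> M * (1 - \<beta> * h)" using bh by (intro mult_left_mono) auto
      thus ?thesis by simp
    qed
    ultimately have M: "M \<le> 2 * norm (e lo) + 2 * \<alpha> * h" by linarith
    have elo: "norm (e lo) \<le> 4 ^ i * 2 * h * \<alpha>" using IH lohi by auto
    have p1: "(4::real) ^ i \<ge> 1" by simp
    have c0: "0 \<le> h * \<alpha>" using a h0 by simp
    have eq1: "2 * (4 ^ i * 2 * h * \<alpha>) + 2 * \<alpha> * h = (4 * 4^i + 2) * (h * \<alpha>)"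
      by (simp add: algebra_simps)
    have eq2: "4 ^ Suc i * 2 * h * \<alpha> = (8 * 4^i) * (h * \<alpha>)" by (simp add: algebra_simps)
    have "(4 * 4^i + 2) * (h * \<alpha>) \<le> (8 * 4^i) * (h * \<alpha>)"
      by (rule mult_right_mono[OF _ c0]) (use p1 in linarith)
    hence "2 * (4 ^ i * 2 * h * \<alpha>) + 2 * \<alpha> * h \<le> 4 ^ Suc i * 2 * h * \<alpha>"
      unfolding eq1 eq2 .
    hence Mb: "M \<le> 4 ^ Suc i * 2 * h * \<alpha>" using M elo by linarith
    show ?case
    proof
      fix t assume t: "t \<in> {0..real (Suc i) * h}"
      show "norm (e t) \<le> 4 ^ Suc i * 2 * h * \<alpha>"
      proof (cases "t \<le> lo")
        case True
        hence "norm (e t) \<le> 4 ^ i * 2 * h * \<alpha>" using IH t by auto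
        also have "\<dots> \<le> 4 ^ Suc i * 2 * h * \<alpha>" using a h0 by (intro mult_right_mono) auto
        finally show ?thesis .
      next
        case False
        hence "t \<in> {lo..hi}" using t hi_def by auto
        thus ?thesis using ts(2) Mb M_def by fastforce
      qed
    qed
  qed
  fix t assume t: "t \<in> {0..T}"
  hence "norm (e t) \<le> 4 ^ n * 2 * h * \<alpha>" using claim[of n] nh by auto
  also have "\<dots> \<le> 4 ^ n * 2 * 1 * \<alpha>" using h1 a by (intro mult_right_mono mult_left_mono) auto
  also have "\<dots> = gw_const \<beta> * \<alpha>" unfolding gw_const_def n_def by simp
  finally show "norm (e t) \<le> gw_const \<beta> * \<alpha>" .
qed

lemma gronwall_cont:
  fixes e e' :: "real \<Rightarrow> 'a::real_normed_vector"
  assumes a: "0 \<le> \<alpha>" and b: "0 \<le> \<beta>" and e0: "e 0 = 0" and small: "gw_const \<beta> * \<alpha> < 1"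
    and der: "\<And>t. t \<in> {0..1} \<Longrightarrow> (e has_vector_derivative e' t) (at t within {0..1})"
    and bd: "\<And>t. t \<in> {0..1} \<Longrightarrow> norm (e t) \<le> 1 \<Longrightarrow> norm (e' t) \<le> \<alpha> + \<beta> * norm (e t)"
  shows "\<And>t. t \<in> {0..1} \<Longrightarrow> norm (e t) \<le> gw_const \<beta> * \<alpha>"
proof -
  have cont: "continuous_on {0..1} e"
    using der by (intro has_derivative_continuous_on) (auto simp: has_vector_derivative_def)
  define S where "S = {0..1} \<inter> (\<lambda>t. norm (e t)) -` {1..}"
  have S: "S = {}"
  proof (rule ccontr)
    assume ne: "S \<noteq> {}"
    have "closed S" unfolding S_def
      by (intro continuous_closed_preimage continuous_on_norm cont) auto
    moreover have "S = {0..1} \<inter> S" unfolding S_def by auto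
    ultimately have "compact S" using compact_Int_closed[of "{0..1::real}" S] by auto
    then obtain T1 where T1: "T1 \<in> S" "\<forall>t\<in>S. T1 \<le> t" using compact_attains_inf[OF _ ne] by blast
    have T1i: "0 \<le> T1" "T1 \<le> 1" "norm (e T1) \<ge> 1" using T1 unfolding S_def by auto
    have below: "norm (e t) < 1" if "0 \<le> t" "t < T1" for t
      using T1(2) that T1i unfolding S_def by force
    have "T1 > 0" using T1i e0 by (cases "T1 = 0") auto
    have "\<exists>s\<ge>0. s \<le> T1 \<and> norm (e s) = 1"
      using IVT'[of "\<lambda>t. norm (e t)" 0 1 T1] T1i e0
        continuous_on_norm[OF continuous_on_subset[OF cont]] by auto
    then obtain s where s: "0 \<le> s" "s \<le> T1" "norm (e s) = 1" by blast
    hence "s \<in> S" using T1i unfolding S_def by auto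
    hence "s = T1" using T1(2) s by force
    hence eT1: "norm (e T1) = 1" using s by simp
    have le1: "norm (e t) \<le> 1" if "t \<in> {0..T1}" for t
      using below[of t] eT1 that by (cases "t = T1") auto
    have d1: "(e has_vector_derivative e' t) (at t within {0..T1})" if t: "t \<in> {0..T1}" for t
    proof -
      have t1: "t \<in> {0..1}" using t T1i by auto
      show ?thesis by (rule has_vector_derivative_within_subset[OF der[OF t1]]) (use T1i in auto)
    qed
    have b1: "norm (e' t) \<le> \<alpha> + \<beta> * norm (e t)" if t: "t \<in> {0..T1}" for t
    proof -
      have t1: "t \<in> {0..1}" using t T1i by auto
      show ?thesis by (rule bd[OF t1 le1[OF t]])
    qed
    have "norm (e T1) \<le> gw_const \<beta> * \<alpha>"
      by (rule gronwall_step[where e=e and e'=e' and T=T1, OF a b \<open>T1 > 0\<close> T1i(2) e0 d1 b1])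
        (use T1i in auto)
    thus False using eT1 small by simp
  qed
  fix t :: real assume t: "t \<in> {0..1}"
  have le1: "norm (e s) \<le> 1" if "s \<in> {0..1}" for s :: real using S that unfolding S_def by force
  show "norm (e t) \<le> gw_const \<beta> * \<alpha>"
    by (rule gronwall_step[where e=e and e'=e' and T=1, OF a b _ _ e0 der bd[OF _ le1] t]) auto
qed

lemma tube_lemma:
  fixes f :: "real \<times> 'c::metric_space \<Rightarrow> 'd::metric_space"
  assumes "compact C" "continuous_on ({0..1} \<times> C) f" "open U" "\<And>c. c \<in> C \<Longrightarrow> f (0, c) \<in> U"
  shows "\<exists>\<epsilon>0>0. \<epsilon>0 \<le> 1 \<and> (\<forall>\<epsilon>\<in>{0..\<epsilon>0}. \<forall>c\<in>C. f (\<epsilon>, c) \<in> U)"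
proof (cases "({0..1} \<times> C) \<inter> f -` (- U) = {}")
  case True
  thus ?thesis by (intro exI[of _ 1]) auto
next
  case False
  define Bad where "Bad = ({0..1} \<times> C) \<inter> f -` (- U)"
  have cC: "compact ({0..1::real} \<times> C)" using assms(1) by (intro compact_Times) auto
  have "closed Bad" unfolding Bad_def
    using continuous_closed_preimage[OF assms(2) compact_imp_closed[OF cC]] assms(3) by auto
  moreover have "Bad = ({0..1} \<times> C) \<inter> Bad" unfolding Bad_def by auto
  ultimately have "compact Bad" using compact_Int_closed[OF cC] by metis
  hence cf: "compact (fst ` Bad)" by (intro compact_continuous_image continuous_intros)
  have ne: "fst ` Bad \<noteq> {}" using False Bad_def by auto
  obtain s where s: "s \<in> fst ` Bad" "\<forall>t\<in>fst ` Bad. s \<le> t" using compact_attains_inf[OF cf ne] by blast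
  then obtain c where c: "(s, c) \<in> Bad" by force
  hence s0: "s \<noteq> 0" using assms(4) unfolding Bad_def by auto
  have s1: "0 \<le> s" "s \<le> 1" using c unfolding Bad_def by auto
  show ?thesis
  proof (intro exI[of _ "s / 2"] conjI ballI)
    show "s / 2 > 0" using s0 s1 by simp
    show "s / 2 \<le> 1" using s1 by simp
    fix \<epsilon> c' assume e: "\<epsilon> \<in> {0..s/2}" and c': "c' \<in> C"
    show "f (\<epsilon>, c') \<in> U"
    proof (rule ccontr)
      assume "f (\<epsilon>, c') \<notin> U"
      hence "(\<epsilon>, c') \<in> Bad" unfolding Bad_def using e c' s1 by auto
      hence "s \<le> \<epsilon>" using s(2) by force
      thus False using e s0 s1 by auto
    qed
  qed
qed




definition Lf :: "('g::euclidean_space \<Rightarrow> 'g \<Rightarrow> 'g) \<Rightarrow> ('h::euclidean_space \<Rightarrow> 'h \<Rightarrow> 'h) \<Rightarrow> ('g \<Rightarrow> 'h) \<Rightarrow> 'g \<times> 'g \<Rightarrow> 'h" where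
  "Lf mG mH Phi p = pd mH (- Phi (fst p)) (Phi (fst p))
      (frechet_derivative Phi (at (fst p)) (pd mG (fst p) 0 (snd p)))"

definition Af :: "('g::euclidean_space \<Rightarrow> 'g \<Rightarrow> 'g) \<Rightarrow> (nat \<Rightarrow> 'g set) \<Rightarrow> ('h::euclidean_space \<Rightarrow> 'h \<Rightarrow> 'h) \<Rightarrow> (nat \<Rightarrow> 'h set)
    \<Rightarrow> ('g \<Rightarrow> 'h) \<Rightarrow> 'g \<times> 'g \<Rightarrow> 'h" where
  "Af mG VG mH VH Phi p = (\<Sum>j\<le>max (gN VG) (gN VH). gcomp VH (Lf mG mH Phi (fst p, gcomp VG (snd p) j)) j)"

definition Yf :: "('g::euclidean_space \<Rightarrow> 'g \<Rightarrow> 'g) \<Rightarrow> (nat \<Rightarrow> 'g set) \<Rightarrow> real \<times> ('g \<times> 'g) \<times> real \<Rightarrow> 'g" where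
  "Yf mG VG q = mG (fst (fst (snd q))) (dil VG (fst q) (snd (snd q) *\<^sub>R snd (fst (snd q))))"

definition Wf :: "('g::euclidean_space \<Rightarrow> 'g \<Rightarrow> 'g) \<Rightarrow> (nat \<Rightarrow> 'g set) \<Rightarrow> ('h::euclidean_space \<Rightarrow> 'h \<Rightarrow> 'h) \<Rightarrow> (nat \<Rightarrow> 'h set)
    \<Rightarrow> ('g \<Rightarrow> 'h) \<Rightarrow> real \<times> ('g \<times> 'g) \<times> real \<Rightarrow> 'h" where
  "Wf mG VG mH VH Phi q = (\<Sum>j\<le>max (gN VG) (gN VH). \<Sum>k\<le>j.
     (fst q ^ (j - k)) *\<^sub>R gcomp VH (Lf mG mH Phi (Yf mG VG q, gcomp VG (snd (fst (snd q))) j)) k)"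

lemma ck_comp_univ: "open U \<Longrightarrow> ck k UNIV g \<Longrightarrow> ck k U f \<Longrightarrow> ck k U (\<lambda>x. g (f x))"
  using ck_compose[of U k UNIV g f] by auto

lemma vec_quot_lim:
  fixes g :: "real \<Rightarrow> 'a::real_normed_vector"
  assumes "(g has_derivative (\<lambda>h. h *\<^sub>R D)) (at 0)" "g 0 = 0"
  shows "((\<lambda>s. g s /\<^sub>R s) \<longlongrightarrow> D) (at_right 0)"
proof -
  have "(g has_derivative (\<lambda>h. h *\<^sub>R D)) (at 0 within {0<..})"
    using assms(1) has_derivative_subset by blast
  hence "((\<lambda>y. (1 / norm (y - 0)) *\<^sub>R (g y - (g 0 + (y - 0) *\<^sub>R D))) \<longlongrightarrow> 0) (at_right 0)"
    unfolding has_derivative_within by blast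
  hence l: "((\<lambda>y. (1 / norm (y - 0)) *\<^sub>R (g y - (g 0 + (y - 0) *\<^sub>R D)) + D) \<longlongrightarrow> 0 + D) (at_right 0)"
    by (intro tendsto_add tendsto_const)
  have ev: "eventually (\<lambda>y. (1 / norm (y - 0)) *\<^sub>R (g y - (g 0 + (y - 0) *\<^sub>R D)) + D = g y /\<^sub>R y) (at_right (0::real))"
    using eventually_at_right_less[of 0] by (rule eventually_mono) (auto simp: assms(2) algebra_simps divide_inverse)
  show ?thesis using tendsto_cong[OF ev] l by simp
qed

lemma filterlim_pow_at_right: "j \<ge> 1 \<Longrightarrow> filterlim (\<lambda>e::real. e ^ j) (at_right 0) (at_right 0)"
proof -
  assume j: "j \<ge> 1"
  have "((\<lambda>e::real. e ^ j) \<longlongrightarrow> 0 ^ j) (at_right 0)"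
    by (intro tendsto_intros)
  moreover have "eventually (\<lambda>e::real. e ^ j \<in> {0<..} \<and> e ^ j \<noteq> 0) (at_right 0)"
    using eventually_at_right_less[of "0::real"] by (rule eventually_mono) auto
  ultimately show ?thesis unfolding filterlim_at using j by (simp add: power_0_left)
qed

context
  fixes mG :: "'g::euclidean_space \<Rightarrow> 'g \<Rightarrow> 'g" and VG :: "nat \<Rightarrow> 'g set"
    and mH :: "'h::euclidean_space \<Rightarrow> 'h \<Rightarrow> 'h" and VH :: "nat \<Rightarrow> 'h set"
    and U :: "'g set" and Phi :: "'g \<Rightarrow> 'h"
  assumes ggG: "graded_group mG VG" and ggH: "graded_group mH VH"
    and oU: "open U" and sm: "smooth_on U Phi"
begin

lemma gvsG: "graded_vs VG" using gg_gvs[OF ggG] .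
lemma gvsH: "graded_vs VH" using gg_gvs[OF ggH] .

lemma ck_Phi: "ck k U Phi" using smooth_on_ck[OF sm] .

lemma ldiff_Lf: "ldiff mG mH Phi y v = Lf mG mH Phi (y, v)"
  unfolding ldiff_def Lf_def inv_tau[OF ggH] tau_eq[OF ggG] by simp

lemma linear_ldiff: "y \<in> U \<Longrightarrow> linear (ldiff mG mH Phi y)"
proof -
  assume y: "y \<in> U"
  have "linear (\<lambda>v. pd mH (- Phi y) (Phi y) (frechet_derivative Phi (at y) (pd mG y 0 v)))"
    using linear_compose[OF linear_compose[OF linear_pd[OF ggG] has_derivative_linear[OF ck_diff[OF ck_Phi y]]]
      linear_pd[OF ggH]] by (simp add: o_def)
  moreover have "ldiff mG mH Phi y = (\<lambda>v. pd mH (- Phi y) (Phi y) (frechet_derivative Phi (at y) (pd mG y 0 v)))"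
    using ldiff_Lf unfolding Lf_def by (simp add: fun_eq_iff)
  ultimately show ?thesis by simp
qed

lemma ck_Lf: "ck k (U \<times> UNIV) (Lf mG mH Phi)"
proof -
  have o: "open (U \<times> (UNIV::'g set))" using oU by (simp add: open_Times)
  have cf: "ck k (U \<times> (UNIV::'g set)) (\<lambda>p. fst p)" by (rule ck_fst[OF ck_id])
  have cs: "ck k (U \<times> (UNIV::'g set)) (\<lambda>p. snd p)" by (rule ck_snd[OF ck_id])
  have cPhi: "ck k (U \<times> (UNIV::'g set)) (\<lambda>p. Phi (fst p))"
    by (rule ck_compose[OF o ck_Phi cf]) auto
  have cG: "ck k (U \<times> (UNIV::'g set)) (\<lambda>p. pd mG (fst p) 0 (snd p))"
    unfolding pd_def
    by (rule ck_comp_univ[OF o ck_pdj[OF ggG]]) (intro ck_pair cf cs ck_const)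
  have cD: "ck k (U \<times> (UNIV::'g set)) (\<lambda>p. frechet_derivative Phi (at (fst p)) (snd p))"
    by (rule ck_deriv_joint[OF oU ck_Phi])
  have cDG: "ck k (U \<times> (UNIV::'g set)) (\<lambda>p. frechet_derivative Phi (at (fst p)) (pd mG (fst p) 0 (snd p)))"
  proof -
    have sub: "(\<lambda>p. (fst p, pd mG (fst p) 0 (snd p))) ` (U \<times> UNIV) \<subseteq> U \<times> UNIV" by auto
    show ?thesis using ck_compose[OF o cD ck_pair[OF cf cG] sub] by simp
  qed
  have "ck k (U \<times> (UNIV::'g set)) (\<lambda>p. pdj mH ((- Phi (fst p), Phi (fst p)),
      (0, frechet_derivative Phi (at (fst p)) (pd mG (fst p) 0 (snd p)))))"
    by (rule ck_comp_univ[OF o ck_pdj[OF ggH]])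
      (intro ck_pair cPhi cDG ck_const ck_linear[OF bounded_linear_minus[OF bounded_linear_ident] cPhi])
  thus ?thesis unfolding Lf_def pd_def by (simp add: case_prod_beta)
qed


lemma F_deriv:
  assumes x: "x \<in> U"
  shows "((\<lambda>w. mH (- Phi x) (Phi (mG x w))) has_derivative (\<lambda>v. Lf mG mH Phi (x, v))) (at 0)"
proof -
  have d1: "(mG x has_derivative (\<lambda>v. pd mG x 0 v)) (at 0)" by (rule left_deriv[OF ggG])
  have d2: "(Phi has_derivative frechet_derivative Phi (at (mG x 0))) (at (mG x 0))"
    using ck_diff[OF ck_Phi[of "Suc 0"]] x by (simp add: m_0_right[OF ggG])
  have d3: "(mH (- Phi x) has_derivative (\<lambda>v. pd mH (- Phi x) (Phi (mG x 0)) v)) (at (Phi (mG x 0)))"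
    by (rule left_deriv[OF ggH])
  show ?thesis using has_derivative_compose[OF has_derivative_compose[OF d1 d2] d3]
    by (simp add: Lf_def m_0_right[OF ggG])
qed

lemma filt_of_pansu:
  assumes x: "x \<in> U" and pdiff: "pansu_diff_at mG VG mH VH Phi x"
  shows "preserves_filtration_at mG VG mH VH Phi x"
  unfolding preserves_filtration_at_def span_grading[OF gvsH]
proof (intro allI subsetI)
  fix j y assume "y \<in> ldiff mG mH Phi x ` VG j"
  then obtain v where v: "v \<in> VG j" "y = ldiff mG mH Phi x v" by auto
  have lin: "linear (ldiff mG mH Phi x)" by (rule linear_ldiff[OF x])
  show "y \<in> {y. \<forall>k>j. gcomp VH y k = 0}"
  proof (cases "j = 0")
    case True
    hence "v = 0" using v gvs_V0[OF gvsG] by auto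
    hence "y = 0" using v linear_0[OF lin] by simp
    thus ?thesis by (simp add: gvsH)
  next
    case False
    hence j1: "j \<ge> 1" by simp
    define F where "F w = mH (- Phi x) (Phi (mG x w))" for w
    define L where "L = Lf mG mH Phi (x, v)"
    have yL: "y = L" using v ldiff_Lf unfolding L_def by simp
    have F0: "F 0 = 0" unfolding F_def by (simp add: m_0_right[OF ggG] m_inv_left[OF ggH])
    have linL: "Lf mG mH Phi (x, h *\<^sub>R v) = h *\<^sub>R L" for h
      using linear_scale[OF lin, of h v] ldiff_Lf unfolding L_def by simp
    have ds: "((\<lambda>s::real. s *\<^sub>R v) has_derivative (\<lambda>h. h *\<^sub>R v)) (at 0)"
      by (intro derivative_eq_intros) auto
    have gd: "((\<lambda>s. F (s *\<^sub>R v)) has_derivative (\<lambda>h. h *\<^sub>R L)) (at 0)"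
      using has_derivative_compose[OF ds, of F "\<lambda>v. Lf mG mH Phi (x, v)"] F_deriv[OF x]
      unfolding F_def linL by simp
    have q: "((\<lambda>s. F (s *\<^sub>R v) /\<^sub>R s) \<longlongrightarrow> L) (at_right 0)"
      by (rule vec_quot_lim[OF gd]) (simp add: F0)
    have q2: "((\<lambda>e. F ((e ^ j) *\<^sub>R v) /\<^sub>R (e ^ j)) \<longlongrightarrow> L) (at_right 0)"
      using filterlim_compose[OF q filterlim_pow_at_right[OF j1]] .
    obtain l where l: "(pansu_quot mG VG mH VH Phi x v \<longlongrightarrow> l) (at_right 0)"
      using pdiff unfolding pansu_diff_at_def by blast
    show ?thesis
    proof (intro CollectI allI impI)
      fix k assume kj: "k > j"
      have blP: "bounded_linear (\<lambda>y. gcomp VH y k)" by (rule bounded_linear_gcomp[OF gvsH])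
      have l1: "((\<lambda>e. gcomp VH (F ((e ^ j) *\<^sub>R v) /\<^sub>R (e ^ j)) k) \<longlongrightarrow> gcomp VH L k) (at_right 0)"
        by (rule bounded_linear.tendsto[OF blP q2])
      have l2: "((\<lambda>e. e ^ (k - j) *\<^sub>R gcomp VH (pansu_quot mG VG mH VH Phi x v e) k)
          \<longlongrightarrow> 0 ^ (k - j) *\<^sub>R gcomp VH l k) (at_right 0)"
        by (intro tendsto_intros bounded_linear.tendsto[OF blP l])
      have z: "(0::real) ^ (k - j) = 0" using kj by simp
      have ev: "eventually (\<lambda>e. e ^ (k - j) *\<^sub>R gcomp VH (pansu_quot mG VG mH VH Phi x v e) k =
          gcomp VH (F ((e ^ j) *\<^sub>R v) /\<^sub>R (e ^ j)) k) (at_right (0::real))"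
        using eventually_at_right_less[of "0::real"]
      proof (rule eventually_mono)
        fix e :: real assume e: "0 < e"
        have pk: "e ^ k = e ^ (k - j) * e ^ j" using kj by (simp add: power_add[symmetric])
        have "pansu_quot mG VG mH VH Phi x v e = dil VH (1 / e) (F ((e ^ j) *\<^sub>R v))"
          unfolding pansu_quot_def F_def dil_in[OF gvsG v(1)] ..
        hence "gcomp VH (pansu_quot mG VG mH VH Phi x v e) k = (1 / e) ^ k *\<^sub>R gcomp VH (F ((e ^ j) *\<^sub>R v)) k"
          by (simp add: gcomp_dil[OF gvsH])
        moreover have "e ^ (k - j) * (1 / e) ^ k = 1 / e ^ j" using e pk by (simp add: field_simps)
        ultimately show "e ^ (k - j) *\<^sub>R gcomp VH (pansu_quot mG VG mH VH Phi x v e) k =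
          gcomp VH (F ((e ^ j) *\<^sub>R v) /\<^sub>R (e ^ j)) k"
          by (simp add: gcomp_scale[OF gvsH] divide_inverse)
      qed
      have "((\<lambda>e. gcomp VH (F ((e ^ j) *\<^sub>R v) /\<^sub>R (e ^ j)) k) \<longlongrightarrow> 0) (at_right 0)"
        using tendsto_cong[OF ev] l2 z by simp
      hence "gcomp VH L k = 0" using tendsto_unique[OF trivial_limit_at_right_real l1] by blast
      thus "gcomp VH y k = 0" using yL by simp
    qed
  qed
qed


lemma ck_A: "ck k (U \<times> UNIV) (Af mG VG mH VH Phi)"
proof -
  have o: "open (U \<times> (UNIV::'g set))" using oU by (simp add: open_Times)
  have cf: "ck k (U \<times> (UNIV::'g set)) (\<lambda>p. fst p)" by (rule ck_fst[OF ck_id])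
  have cs: "ck k (U \<times> (UNIV::'g set)) (\<lambda>p. snd p)" by (rule ck_snd[OF ck_id])
  have "ck k (U \<times> (UNIV::'g set)) (\<lambda>p. gcomp VH (Lf mG mH Phi (fst p, gcomp VG (snd p) j)) j)" for j
  proof (rule ck_linear[OF bounded_linear_gcomp[OF gvsH]])
    have sub: "(\<lambda>p. (fst p, gcomp VG (snd p) j)) ` (U \<times> UNIV) \<subseteq> U \<times> UNIV" by auto
    show "ck k (U \<times> UNIV) (\<lambda>p. Lf mG mH Phi (fst p, gcomp VG (snd p) j))"
      using ck_compose[OF o ck_Lf ck_pair[OF cf ck_linear[OF bounded_linear_gcomp[OF gvsG] cs]] sub] by simp
  qed
  hence "ck k (U \<times> (UNIV::'g set)) (\<lambda>p. \<Sum>j\<le>max (gN VG) (gN VH). gcomp VH (Lf mG mH Phi (fst p, gcomp VG (snd p) j)) j)"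
    by (intro ck_sum) auto
  thus ?thesis unfolding Af_def by (simp add: case_prod_beta)
qed

lemma linear_Lf: "y \<in> U \<Longrightarrow> linear (\<lambda>v. Lf mG mH Phi (y, v))"
  using linear_ldiff ldiff_Lf by (metis (no_types, lifting) ext)

lemma W_eq:
  assumes y: "y \<in> U" and filt: "preserves_filtration_at mG VG mH VH Phi y" and e: "e > 0"
  shows "dil VH (1 / e) (Lf mG mH Phi (y, dil VG e z)) =
    (\<Sum>j\<le>max (gN VG) (gN VH). \<Sum>k\<le>j. (e ^ (j - k)) *\<^sub>R gcomp VH (Lf mG mH Phi (y, gcomp VG z j)) k)"
proof -
  let ?N = "max (gN VG) (gN VH)"
  let ?L = "\<lambda>v. Lf mG mH Phi (y, v)"
  define c where "c k j = gcomp VH (?L (gcomp VG z j)) k" for k j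
  have lin: "linear ?L" by (rule linear_Lf[OF y])
  have linP: "linear (\<lambda>w. gcomp VH w k)" for k by (rule linear_gcomp[OF gvsH])
  have c0: "c k j = 0" if "k > j" for k j
  proof -
    have "ldiff mG mH Phi y (gcomp VG z j) \<in> span (\<Union>i\<in>{1..j}. VH i)"
      using filt gcomp_in_V[OF gvsG] unfolding preserves_filtration_at_def by blast
    thus ?thesis unfolding c_def span_grading[OF gvsH] ldiff_Lf using that by auto
  qed
  have dz: "dil VG e z = (\<Sum>j\<le>?N. (e ^ j) *\<^sub>R gcomp VG z j)" by (rule dil_sum[OF gvsG]) simp
  have "?L (dil VG e z) = (\<Sum>j\<le>?N. (e ^ j) *\<^sub>R ?L (gcomp VG z j))"
    unfolding dz by (simp add: linear_sum[OF lin] linear_scale[OF lin])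
  hence pk: "gcomp VH (?L (dil VG e z)) k = (\<Sum>j\<le>?N. (e ^ j) *\<^sub>R c k j)" for k
    unfolding c_def by (simp add: linear_sum[OF linP] linear_scale[OF linP])
  have "dil VH (1 / e) (?L (dil VG e z)) = (\<Sum>k\<le>?N. ((1 / e) ^ k) *\<^sub>R gcomp VH (?L (dil VG e z)) k)"
    by (rule dil_sum[OF gvsH]) simp
  also have "\<dots> = (\<Sum>k\<le>?N. \<Sum>j\<le>?N. ((1 / e) ^ k * e ^ j) *\<^sub>R c k j)"
    unfolding pk by (simp add: scaleR_sum_right)
  also have "\<dots> = (\<Sum>j\<le>?N. \<Sum>k\<le>?N. ((1 / e) ^ k * e ^ j) *\<^sub>R c k j)"
    by (rule sum.swap)
  also have "\<dots> = (\<Sum>j\<le>?N. \<Sum>k\<le>j. (e ^ (j - k)) *\<^sub>R c k j)"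
  proof (rule sum.cong[OF refl])
    fix j assume j: "j \<in> {..?N}"
    have "(\<Sum>k\<le>?N. ((1 / e) ^ k * e ^ j) *\<^sub>R c k j) = (\<Sum>k\<le>j. ((1 / e) ^ k * e ^ j) *\<^sub>R c k j)"
      using j c0 by (intro sum.mono_neutral_right) auto
    also have "\<dots> = (\<Sum>k\<le>j. (e ^ (j - k)) *\<^sub>R c k j)"
    proof (rule sum.cong[OF refl])
      fix k assume k: "k \<in> {..j}"
      have "e ^ j = e ^ (j - k) * e ^ k" using k by (simp add: power_add[symmetric])
      hence "(1 / e) ^ k * e ^ j = e ^ (j - k)" using e by (simp add: field_simps)
      thus "((1 / e) ^ k * e ^ j) *\<^sub>R c k j = (e ^ (j - k)) *\<^sub>R c k j" by simp
    qed
    finally show "(\<Sum>k\<le>?N. ((1 / e) ^ k * e ^ j) *\<^sub>R c k j) = (\<Sum>k\<le>j. (e ^ (j - k)) *\<^sub>R c k j)" .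
  qed
  finally show ?thesis unfolding c_def .
qed

lemma Yf_simp: "Yf mG VG (e, ((x, z), t)) = mG x (dil VG e (t *\<^sub>R z))"
  unfolding Yf_def by simp

lemma W_zero: "Wf mG VG mH VH Phi (0, ((x, z), t)) = Af mG VG mH VH Phi (x, z)"
proof -
  have Y0: "Yf mG VG (0, ((x, z), t)) = x"
    unfolding Yf_simp dil_0[OF gvsG] m_0_right[OF ggG] ..
  have inner: "(\<Sum>k\<le>j. ((0::real) ^ (j - k)) *\<^sub>R f k) = f j" for j and f :: "nat \<Rightarrow> 'h"
  proof -
    have "(\<Sum>k\<le>j. ((0::real) ^ (j - k)) *\<^sub>R f k) = (\<Sum>k\<le>j. if k = j then f k else 0)"
      by (rule sum.cong) auto
    also have "\<dots> = f j" by (subst sum.delta) auto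
    finally show ?thesis .
  qed
  show ?thesis unfolding Wf_def Af_def Y0 by (simp add: inner)
qed

lemma continuous_Yf: "continuous_on S (Yf mG VG)"
proof -
  have cd: "continuous_on UNIV (\<lambda>p. dil VG (fst p) (snd p))" by (rule continuous_dil[OF gvsG])
  have c1: "continuous_on S (\<lambda>q. (\<lambda>p. dil VG (fst p) (snd p)) (fst q, snd (snd q) *\<^sub>R snd (fst (snd q))))"
    by (rule continuous_on_compose2[OF cd]) (auto intro!: continuous_intros)
  have "continuous_on S (\<lambda>q. mm mG (fst (fst (snd q)), dil VG (fst q) (snd (snd q) *\<^sub>R snd (fst (snd q)))))"
    by (rule continuous_on_compose2[OF continuous_mm[OF ggG, of UNIV]]) (use c1 in \<open>auto intro!: continuous_intros\<close>)
  thus ?thesis unfolding Yf_def mm_def by simp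
qed

lemma continuous_Wf:
  assumes "Yf mG VG ` S \<subseteq> U"
  shows "continuous_on S (Wf mG VG mH VH Phi)"
proof -
  have cL: "continuous_on (U \<times> UNIV) (Lf mG mH Phi)" by (rule ck_continuous[OF ck_Lf[of 0]])
  have "continuous_on S (\<lambda>q. Lf mG mH Phi (Yf mG VG q, gcomp VG (snd (fst (snd q))) j))" for j
    by (rule continuous_on_compose2[OF cL]) 
       (use assms in \<open>auto intro!: continuous_intros continuous_Yf
          linear_continuous_on_compose[OF _ linear_gcomp[OF gvsG]]\<close>)
  hence "continuous_on S (\<lambda>q. \<Sum>j\<le>max (gN VG) (gN VH). \<Sum>k\<le>j.
     (fst q ^ (j - k)) *\<^sub>R gcomp VH (Lf mG mH Phi (Yf mG VG q, gcomp VG (snd (fst (snd q))) j)) k)"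
    by (intro continuous_intros linear_continuous_on_compose[OF _ linear_gcomp[OF gvsH]]) auto
  thus ?thesis unfolding Wf_def by (simp only:)
qed


lemma path_deriv:
  assumes x: "x \<in> U" and e: "e > 0" and Y: "Yf mG VG (e, ((x, z), t)) \<in> U"
  shows "((\<lambda>s. pansu_quot mG VG mH VH Phi x (s *\<^sub>R z) e) has_vector_derivative
     pd mH (pansu_quot mG VG mH VH Phi x (t *\<^sub>R z) e) 0
       (dil VH (1 / e) (Lf mG mH Phi (Yf mG VG (e, ((x, z), t)), dil VG e z)))) (at t)"
proof -
  define w where "w = dil VG e z"
  define yt where "yt = mG x (t *\<^sub>R w)"
  have Yyt: "Yf mG VG (e, ((x, z), t)) = yt" unfolding Yf_simp yt_def w_def dil_scale[OF gvsG] ..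
  have yU: "yt \<in> U" using Y Yyt by simp
  have pq: "pansu_quot mG VG mH VH Phi x (s *\<^sub>R z) e = dil VH (1 / e) (mH (- Phi x) (Phi (mG x (s *\<^sub>R w))))" for s
    unfolding pansu_quot_def w_def dil_scale[OF gvsG] ..
  have yeq: "mG x (s *\<^sub>R w) = mG yt ((s - t) *\<^sub>R w)" for s
    unfolding yt_def gg_assoc[OF ggG] gg_line[OF ggG] by simp
  have dl: "((\<lambda>s. (s - t) *\<^sub>R w) has_derivative (\<lambda>h. h *\<^sub>R w)) (at t)"
    by (intro derivative_eq_intros) auto
  have dy: "((\<lambda>s. mG x (s *\<^sub>R w)) has_derivative (\<lambda>h. pd mG yt 0 (h *\<^sub>R w))) (at t)"
    unfolding yeq using has_derivative_compose[OF dl left_deriv[OF ggG, of yt "(t - t) *\<^sub>R w"]] by simp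
  have dPhi: "(Phi has_derivative frechet_derivative Phi (at (mG x (t *\<^sub>R w)))) (at (mG x (t *\<^sub>R w)))"
    using ck_diff[OF ck_Phi[of "Suc 0"]] yU unfolding yt_def by blast
  have dM: "(mH (- Phi x) has_derivative (\<lambda>v. pd mH (- Phi x) (Phi (mG x (t *\<^sub>R w))) v)) (at (Phi (mG x (t *\<^sub>R w))))"
    by (rule left_deriv[OF ggH])
  have bld: "bounded_linear (dil VH (1 / e))" by (rule bounded_linear_dil[OF gvsH])
  have d: "((\<lambda>s. dil VH (1 / e) (mH (- Phi x) (Phi (mG x (s *\<^sub>R w))))) has_derivative
     (\<lambda>h. dil VH (1 / e) (pd mH (- Phi x) (Phi yt) (frechet_derivative Phi (at yt) (pd mG yt 0 (h *\<^sub>R w)))))) (at t)"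
    using bounded_linear.has_derivative[OF bld has_derivative_compose[OF has_derivative_compose[OF dy dPhi] dM]]
    unfolding yt_def by simp
  define D where "D = dil VH (1 / e) (pd mH (- Phi x) (Phi yt) (frechet_derivative Phi (at yt) (pd mG yt 0 w)))"
  have linfd: "linear (frechet_derivative Phi (at yt))"
    using has_derivative_linear[OF ck_diff[OF ck_Phi[of "Suc 0"] yU]] .
  have "dil VH (1 / e) (pd mH (- Phi x) (Phi yt) (frechet_derivative Phi (at yt) (pd mG yt 0 (h *\<^sub>R w)))) = h *\<^sub>R D" for h
    unfolding D_def linear_scale[OF linear_pd[OF ggG]] linear_scale[OF linfd] linear_scale[OF linear_pd[OF ggH]]
      dil_scale[OF gvsH] ..
  hence d2: "((\<lambda>s. pansu_quot mG VG mH VH Phi x (s *\<^sub>R z) e) has_derivative (\<lambda>h. h *\<^sub>R D)) (at t)"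
    using d unfolding pq by simp
  have "D = dil VH (1 / e) (pd mH (mH (- Phi x) (Phi yt)) 0 (Lf mG mH Phi (yt, w)))"
    unfolding D_def Lf_def pd_via_tau[OF ggH, of "- Phi x" "Phi yt"] by simp
  also have "\<dots> = pd mH (dil VH (1 / e) (mH (- Phi x) (Phi yt))) 0 (dil VH (1 / e) (Lf mG mH Phi (yt, w)))"
    by (rule tau_dil[OF ggH]) (use e in simp)
  also have "dil VH (1 / e) (mH (- Phi x) (Phi yt)) = pansu_quot mG VG mH VH Phi x (t *\<^sub>R z) e"
    unfolding pq yt_def ..
  finally show ?thesis using d2 unfolding has_vector_derivative_def Yyt w_def by simp
qed


lemma UC:
  assumes K: "compact K" "K \<subseteq> U \<times> UNIV"
    and filt: "\<forall>y\<in>U. preserves_filtration_at mG VG mH VH Phi y"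
  shows "uniform_limit K (\<lambda>e q. pansu_quot mG VG mH VH Phi (fst q) (snd q) e) (Af mG VG mH VH Phi) (at_right 0)"
proof -
  let ?A = "Af mG VG mH VH Phi"
  let ?W = "Wf mG VG mH VH Phi"
  let ?Y = "Yf mG VG"
  let ?pq = "pansu_quot mG VG mH VH Phi"
  have cA: "continuous_on K ?A" using ck_continuous[OF ck_A[of 0]] K(2) continuous_on_subset by blast
  obtain Am where Am: "Am \<ge> 0" "\<forall>q\<in>K. norm (?A q) \<le> Am" using compact_bound[OF K(1) cA] by blast
  define R where "R = Am + 1"
  have ckl: "ck k UNIV (\<lambda>y. pd mH y 0 l)" for k l
  proof -
    have "ck k UNIV (\<lambda>y::'h. ((y, 0::'h), (0::'h, l)))" by (intro ck_pair ck_id ck_const)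
    thus ?thesis unfolding pd_def by (rule ck_comp_univ[OF open_UNIV ck_pdj[OF ggH]])
  qed
  have cpd: "continuous_on S (\<lambda>y. pd mH y 0 l)" for l S
    using ck_continuous[OF ckl[of 0 l]] continuous_on_subset by blast
  have "continuous_on (cball 0 R) (\<lambda>y. \<Sum>l\<in>Basis. norm (pd mH y 0 l))"
    by (intro continuous_on_sum continuous_on_norm cpd)
  then obtain C1 where C1: "C1 \<ge> 0" "\<forall>y\<in>cball 0 R. norm (\<Sum>l\<in>Basis. norm (pd mH y 0 l)) \<le> C1"
    using compact_bound[OF compact_cball] by blast
  have C1b: "norm (pd mH y 0 v) \<le> C1 * norm v" if "norm y \<le> R" for y v
  proof -
    have "norm (pd mH y 0 v) \<le> norm v * (\<Sum>l\<in>Basis. norm (pd mH y 0 l))"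
      by (rule linear_norm_bound[OF linear_pd[OF ggH]])
    also have "(\<Sum>l\<in>Basis. norm (pd mH y 0 l)) \<le> C1"
      using C1(2) that by (auto simp: sum_nonneg)
    hence "norm v * (\<Sum>l\<in>Basis. norm (pd mH y 0 l)) \<le> norm v * C1" by (intro mult_left_mono) auto
    finally show ?thesis by (simp add: mult.commute)
  qed
  obtain Lp where Lp: "Lp \<ge> 0" "\<forall>l\<in>Basis. \<forall>y\<in>cball 0 R. \<forall>y'\<in>cball 0 R.
      norm (pd mH y 0 l - pd mH y' 0 l) \<le> Lp * norm (y - y')"
    using lip_family[of Basis "\<lambda>l y. pd mH y 0 l" "cball 0 R"] ckl by auto
  define \<beta> where "\<beta> = real DIM('h) * Am * Lp"
  have b0: "\<beta> \<ge> 0" unfolding \<beta>_def using Am Lp by simp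
  have C2b: "norm (pd mH y 0 a - pd mH y' 0 a) \<le> \<beta> * norm (y - y')"
    if y: "norm y \<le> R" "norm y' \<le> R" and a: "norm a \<le> Am" for y y' a
  proof -
    have ex: "pd mH w 0 a = (\<Sum>l\<in>Basis. (a \<bullet> l) *\<^sub>R pd mH w 0 l)" for w
      by (rule linear_basis_expand[OF linear_pd[OF ggH]])
    have e1: "(\<Sum>l\<in>Basis. (a \<bullet> l) *\<^sub>R (pd mH y 0 l - pd mH y' 0 l)) =
        (\<Sum>l\<in>Basis. (a \<bullet> l) *\<^sub>R pd mH y 0 l) - (\<Sum>l\<in>Basis. (a \<bullet> l) *\<^sub>R pd mH y' 0 l)"
      by (simp add: sum_subtractf scaleR_diff_right)
    have eq: "pd mH y 0 a - pd mH y' 0 a = (\<Sum>l\<in>Basis. (a \<bullet> l) *\<^sub>R (pd mH y 0 l - pd mH y' 0 l))"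
      unfolding e1 by (simp only: ex[of y, symmetric] ex[of y', symmetric])
    have "norm (pd mH y 0 a - pd mH y' 0 a) \<le> (\<Sum>l\<in>Basis. norm ((a \<bullet> l) *\<^sub>R (pd mH y 0 l - pd mH y' 0 l)))"
      unfolding eq by (rule norm_sum)
    also have "\<dots> \<le> (\<Sum>l\<in>(Basis::'h set). Am * (Lp * norm (y - y')))"
    proof (rule sum_mono)
      fix l :: 'h assume l: "l \<in> Basis"
      have "\<bar>a \<bullet> l\<bar> \<le> Am" using Basis_le_norm[OF l, of a] a by simp
      moreover have "norm (pd mH y 0 l - pd mH y' 0 l) \<le> Lp * norm (y - y')" using Lp(2) l y by auto
      ultimately show "norm ((a \<bullet> l) *\<^sub>R (pd mH y 0 l - pd mH y' 0 l)) \<le> Am * (Lp * norm (y - y'))"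
        by (simp add: mult_mono')
    qed
    also have "\<dots> = \<beta> * norm (y - y')" unfolding \<beta>_def by simp
    finally show ?thesis .
  qed
  define C where "C = K \<times> {0..1::real}"
  have cC: "compact C" unfolding C_def using K(1) by (intro compact_Times) auto
  have Y0: "?Y (0, c) \<in> U" if "c \<in> C" for c
    using that K(2) unfolding C_def by (auto simp: Yf_def dil_0[OF gvsG] m_0_right[OF ggG])
  obtain e0 where e0: "e0 > 0" "e0 \<le> 1" "\<forall>e\<in>{0..e0}. \<forall>c\<in>C. ?Y (e, c) \<in> U"
    using tube_lemma[OF cC continuous_Yf oU Y0] by blast
  define D where "D = {0..e0} \<times> C"
  have YD: "?Y ` D \<subseteq> U" using e0(3) unfolding D_def by auto
  have cD: "compact D" unfolding D_def using cC by (intro compact_Times) auto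
  have uW: "uniformly_continuous_on D ?W" by (rule compact_uniformly_continuous[OF continuous_Wf[OF YD] cD])
  show ?thesis unfolding uniform_limit_iff
  proof (intro allI impI)
    fix \<delta> :: real assume \<delta>: "\<delta> > 0"
    define Cg where "Cg = gw_const \<beta>"
    have Cg: "Cg > 0" unfolding Cg_def by (rule gw_const_pos)
    define \<rho> where "\<rho> = min \<delta> 1 / (2 * Cg * (C1 + 1))"
    have \<rho>: "\<rho> > 0" unfolding \<rho>_def using \<delta> Cg C1 by simp
    have small: "Cg * (C1 * \<rho>) < min \<delta> 1"
    proof -
      have "Cg * (C1 * \<rho>) \<le> Cg * ((C1 + 1) * \<rho>)" using Cg \<rho> by (intro mult_left_mono mult_right_mono) auto
      also have "\<dots> = (\<rho> * (2 * Cg * (C1 + 1))) / 2" by (simp add: algebra_simps)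
      also have "\<rho> * (2 * Cg * (C1 + 1)) = min \<delta> 1"
      proof -
        have pos: "2 * Cg * (C1 + 1) > 0" using Cg C1 by simp
        thus ?thesis unfolding \<rho>_def using Cg C1 by simp
      qed
      also have "min \<delta> 1 / 2 < min \<delta> 1" using \<delta> by (simp add: min_def)
      finally show ?thesis .
    qed
    obtain d where d: "d > 0" "\<forall>q\<in>D. \<forall>q'\<in>D. dist q' q < d \<longrightarrow> dist (?W q') (?W q) < \<rho>"
      using uW \<rho> unfolding uniformly_continuous_on_def by blast
    show "\<forall>\<^sub>F e in at_right 0. \<forall>q\<in>K. dist (?pq (fst q) (snd q) e) (?A q) < \<delta>"
      unfolding eventually_at_right_field
    proof (intro exI[of _ "min d e0"] conjI allI impI ballI)
      show "min d e0 > 0" using d e0 by simp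
      fix e :: real and q assume e: "0 < e" "e < min d e0" and q: "q \<in> K"
      obtain x z where qxz: "q = (x, z)" by (cases q)
      have xU: "x \<in> U" using q K(2) qxz by auto
      define a where "a = ?A (x, z)"
      have na: "norm a \<le> Am" using Am q qxz unfolding a_def by auto
      define E where "E s = ?pq x (s *\<^sub>R z) e - s *\<^sub>R a" for s
      define E' where "E' s = pd mH (?pq x (s *\<^sub>R z) e) 0
          (dil VH (1 / e) (Lf mG mH Phi (?Y (e, ((x, z), s)), dil VG e z))) - a" for s
      have E0: "E 0 = 0"
        unfolding E_def pansu_quot_def
        by (simp add: linear_0[OF linear_dil[OF gvsG]] linear_0[OF linear_dil[OF gvsH]]
            m_0_right[OF ggG] m_inv_left[OF ggH])
      have inC: "((x, z), s) \<in> C" if "s \<in> {0..1}" for s using that q qxz unfolding C_def by auto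
      have YU: "?Y (e, ((x, z), s)) \<in> U" if "s \<in> {0..1}" for s using e0(3) inC[OF that] e by auto
      have der: "(E has_vector_derivative E' s) (at s within {0..1})" if s: "s \<in> {0..1}" for s
      proof -
        have "(E has_vector_derivative E' s) (at s)"
          unfolding E_def E'_def
          by (intro has_vector_derivative_diff path_deriv[OF xU e(1) YU[OF s]])
            (auto intro!: derivative_eq_intros simp: has_vector_derivative_def)
        thus ?thesis by (rule has_vector_derivative_at_within)
      qed
      have bd: "norm (E' s) \<le> C1 * \<rho> + \<beta> * norm (E s)" if s: "s \<in> {0..1}" and E1: "norm (E s) \<le> 1" for s
      proof -
        define \<gamma> where "\<gamma> = ?pq x (s *\<^sub>R z) e"
        define u where "u = dil VH (1 / e) (Lf mG mH Phi (?Y (e, ((x, z), s)), dil VG e z))"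
        have u: "u = ?W (e, ((x, z), s))"
          unfolding u_def Wf_def W_eq[OF YU[OF s] filt[rule_format, OF YU[OF s]] e(1)] by simp
        have a': "a = ?W (0, ((x, z), s))" unfolding a_def W_zero ..
        have inD: "(e, ((x, z), s)) \<in> D" "(0, ((x, z), s)) \<in> D"
          using inC[OF s] e e0 unfolding D_def by auto
        have "dist (e, ((x, z), s)) (0, ((x, z), s)) < d" using e by (simp add: dist_Pair_Pair)
        hence ua: "norm (u - a) < \<rho>" using d(2) inD unfolding u a' dist_norm by blast
        have ns: "norm (s *\<^sub>R a) \<le> Am" using s na Am
          by (simp add: mult_le_one mult_left_le_one_le order_trans[OF mult_left_le_one_le])
        have g: "\<gamma> = E s + s *\<^sub>R a" unfolding E_def \<gamma>_def by simp
        have ng: "norm \<gamma> \<le> R" unfolding g R_def using E1 ns norm_triangle_le by (metis add.commute add_mono)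
        have nh: "norm (s *\<^sub>R a) \<le> R" using ns unfolding R_def by simp
        have ta: "pd mH (s *\<^sub>R a) 0 a = a" by (rule tau_line[OF ggH])
        have "E' s = pd mH \<gamma> 0 (u - a) + (pd mH \<gamma> 0 a - pd mH (s *\<^sub>R a) 0 a)"
          unfolding E'_def \<gamma>_def[symmetric] u_def[symmetric] ta linear_diff[OF linear_pd[OF ggH]] by simp
        hence "norm (E' s) \<le> norm (pd mH \<gamma> 0 (u - a)) + norm (pd mH \<gamma> 0 a - pd mH (s *\<^sub>R a) 0 a)"
          by (simp add: norm_triangle_ineq)
        also have "\<dots> \<le> C1 * norm (u - a) + \<beta> * norm (\<gamma> - s *\<^sub>R a)"
          by (intro add_mono C1b C2b ng nh na)
        also have "\<dots> \<le> C1 * \<rho> + \<beta> * norm (E s)"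
          using ua C1(1) unfolding g by (simp add: mult_left_mono)
        finally show ?thesis .
      qed
      have "norm (E 1) \<le> gw_const \<beta> * (C1 * \<rho>)"
      proof (rule gronwall_cont[where e=E and e'=E' and \<alpha>="C1 * \<rho>" and \<beta>=\<beta>])
        show "0 \<le> C1 * \<rho>" using C1 \<rho> by simp
        show "gw_const \<beta> * (C1 * \<rho>) < 1" using small unfolding Cg_def by simp
      qed (use b0 E0 der bd in auto)
      hence "norm (E 1) < \<delta>" using small unfolding Cg_def by simp
      thus "dist (?pq (fst q) (snd q) e) (?A q) < \<delta>"
        unfolding qxz dist_norm E_def a_def by simp
    qed
  qed
qed


lemma PD_eq:
  assumes filt: "\<forall>y\<in>U. preserves_filtration_at mG VG mH VH Phi y" and x: "x \<in> U"
  shows "((\<lambda>e. pansu_quot mG VG mH VH Phi x z e) \<longlongrightarrow> Af mG VG mH VH Phi (x, z)) (at_right 0)"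
    and "PD mG VG mH VH Phi x z = Af mG VG mH VH Phi (x, z)"
proof -
  have "uniform_limit {(x, z)} (\<lambda>e q. pansu_quot mG VG mH VH Phi (fst q) (snd q) e) (Af mG VG mH VH Phi) (at_right 0)"
    by (rule UC[OF _ _ filt]) (use x in auto)
  from tendsto_uniform_limitI[OF this, of "(x, z)"]
  show l: "((\<lambda>e. pansu_quot mG VG mH VH Phi x z e) \<longlongrightarrow> Af mG VG mH VH Phi (x, z)) (at_right 0)" by simp
  show "PD mG VG mH VH Phi x z = Af mG VG mH VH Phi (x, z)"
    unfolding PD_def by (rule tendsto_Lim[OF trivial_limit_at_right_real l])
qed

lemma main_result:
  "(unif_pansu_diff_on mG VG mH VH Phi U \<longleftrightarrow>
            (\<forall>x\<in>U. preserves_filtration_at mG VG mH VH Phi x))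
       \<and> ((\<forall>x\<in>U. preserves_filtration_at mG VG mH VH Phi x) \<longrightarrow>
            smooth_on (U \<times> UNIV) (\<lambda>p. PD mG VG mH VH Phi (fst p) (snd p)))"
proof (intro conjI iffI impI)
  assume "unif_pansu_diff_on mG VG mH VH Phi U"
  thus "\<forall>x\<in>U. preserves_filtration_at mG VG mH VH Phi x"
    unfolding unif_pansu_diff_on_def using filt_of_pansu by blast
next
  assume filt: "\<forall>x\<in>U. preserves_filtration_at mG VG mH VH Phi x"
  have o: "open (U \<times> (UNIV::'g set))" using oU by (simp add: open_Times)
  show "unif_pansu_diff_on mG VG mH VH Phi U"
    unfolding unif_pansu_diff_on_def
  proof (intro conjI ballI)
    fix x assume x: "x \<in> U"
    show "pansu_diff_at mG VG mH VH Phi x"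
      unfolding pansu_diff_at_def using PD_eq(1)[OF filt x] by blast
  next
    fix p assume p: "p \<in> U \<times> (UNIV::'g set)"
    obtain r where r: "r > 0" "cball p r \<subseteq> U \<times> UNIV" using o p open_contains_cball by blast
    have ul: "uniform_limit (cball p r) (\<lambda>e q. pansu_quot mG VG mH VH Phi (fst q) (snd q) e)
        (Af mG VG mH VH Phi) (at_right 0)"
      by (rule UC[OF compact_cball r(2) filt])
    have "uniform_limit (cball p r) (\<lambda>e q. pansu_quot mG VG mH VH Phi (fst q) (snd q) e)
        (\<lambda>q. PD mG VG mH VH Phi (fst q) (snd q)) (at_right 0)"
    proof (subst uniform_limit_cong'[where g="\<lambda>e q. pansu_quot mG VG mH VH Phi (fst q) (snd q) e"
          and i="Af mG VG mH VH Phi"])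
      fix q assume "q \<in> cball p r"
      hence "fst q \<in> U" using r by auto
      thus "PD mG VG mH VH Phi (fst q) (snd q) = Af mG VG mH VH Phi q"
        using PD_eq(2)[OF filt] by (metis prod.collapse)
    qed (use ul in auto)
    moreover have "p \<in> interior (cball p r)" using r by simp
    ultimately show "\<exists>K. compact K \<and> K \<subseteq> U \<times> UNIV \<and> p \<in> interior K \<and>
        uniform_limit K (\<lambda>eps q. pansu_quot mG VG mH VH Phi (fst q) (snd q) eps)
          (\<lambda>q. PD mG VG mH VH Phi (fst q) (snd q)) (at_right 0)"
      using r by (intro exI[of _ "cball p r"]) auto
  qed
next
  assume filt: "\<forall>x\<in>U. preserves_filtration_at mG VG mH VH Phi x"
  have o: "open (U \<times> (UNIV::'g set))" using oU by (simp add: open_Times)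
  show "smooth_on (U \<times> UNIV) (\<lambda>p. PD mG VG mH VH Phi (fst p) (snd p))"
  proof (rule ck_smooth_on[OF o])
    fix k
    show "ck k (U \<times> UNIV) (\<lambda>p. PD mG VG mH VH Phi (fst p) (snd p))"
    proof (rule ck_cong[OF o _ ck_A])
      fix p :: "'g \<times> 'g" assume "p \<in> U \<times> UNIV"
      thus "Af mG VG mH VH Phi p = PD mG VG mH VH Phi (fst p) (snd p)"
        using PD_eq(2)[OF filt, of "fst p" "snd p"] by auto
    qed
  qed
qed

end


theorem theorem1p5:
  fixes mG :: "'g::euclidean_space \<Rightarrow> 'g \<Rightarrow> 'g" and VG :: "nat \<Rightarrow> 'g set"
    and mH :: "'h::euclidean_space \<Rightarrow> 'h \<Rightarrow> 'h" and VH :: "nat \<Rightarrow> 'h set"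
    and U :: "'g set" and Phi :: "'g \<Rightarrow> 'h"
  assumes "graded_group mG VG" and "graded_group mH VH"
    and "open U" and "smooth_on U Phi"
  shows "(unif_pansu_diff_on mG VG mH VH Phi U \<longleftrightarrow>
            (\<forall>x\<in>U. preserves_filtration_at mG VG mH VH Phi x))
       \<and> ((\<forall>x\<in>U. preserves_filtration_at mG VG mH VH Phi x) \<longrightarrow>
            smooth_on (U \<times> UNIV) (\<lambda>p. PD mG VG mH VH Phi (fst p) (snd p)))"
  by (rule main_result[OF assms])

end
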